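(* Let $C>0$ and $\Gamma\in G(n,p)$. If $p<\frac{\log(n)+\log(\log(n))-\omega(n)}{n}$ for some $\omega(n)\to+\infty$, then a.a.s. $\Gamma$ has at least $C$ non-adjacent domination pairs; if further $pn^2\to\infty$, then a.a.s. $\Gamma$ also has at least $C$ adjacent domination pairs. Dually, if $1-p<\frac{\log(n)+\log(\log(n))-\omega(n)}{n}$ for some $\omega(n)\to+\infty$, then a.a.s. $\Gamma$ has at least $C$ adjacent domination pairs; if further $(1-p)pn^2\to\infty$, then a.a.s. $\Gamma$ also has at least $C$ non-adjacent domination pairs.
   Context: $G(n,p)$ is the Erdős–Rényi random graph on $n$ vertices with each edge present independently with probability $p=p(n)$; a.a.s. means with probability tending to $1$ as $n\to\infty$; $\log$ is natural logarithm. $\mathrm{st}(a)$ is $a$ together with its neighbours; for distinct $a,b$, $a$ dominates $b$ if every neighbour of $b$ lies in $\mathrm{st}(a)$; such a domination pair $(a,b)$ is adjacent if $a\sim b$ and non-adjacent otherwise. *)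

theory Defs
  imports "HOL-Analysis.Analysis"
begin

text \<open>Vertex set of G(n,p) is {0..<n}; a graph is a set of 2-element subsets (edges).\<close>

definition all_edges :: "nat \<Rightarrow> nat set set" where
  "all_edges n = {e. \<exists>a b. a < n \<and> b < n \<and> a \<noteq> b \<and> e = {a, b}}"

definition gnp_prob :: "nat \<Rightarrow> real \<Rightarrow> (nat set set \<Rightarrow> bool) \<Rightarrow> real" where
  "gnp_prob n p P = (\<Sum>E \<in> Pow (all_edges n).
     (if P E then p ^ card E * (1 - p) ^ (card (all_edges n) - card E) else 0))"

definition adj :: "nat set set \<Rightarrow> nat \<Rightarrow> nat \<Rightarrow> bool" where
  "adj E a b \<longleftrightarrow> a \<noteq> b \<and> {a, b} \<in> E"

definition dominates :: "nat \<Rightarrow> nat set set \<Rightarrow> nat \<Rightarrow> nat \<Rightarrow> bool" where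
  "dominates n E a b \<longleftrightarrow> a < n \<and> b < n \<and> a \<noteq> b \<and>
     (\<forall>c < n. adj E b c \<longrightarrow> c = a \<or> adj E a c)"

definition adj_dom_pairs :: "nat \<Rightarrow> nat set set \<Rightarrow> (nat \<times> nat) set" where
  "adj_dom_pairs n E = {(a, b). dominates n E a b \<and> adj E a b}"

definition nonadj_dom_pairs :: "nat \<Rightarrow> nat set set \<Rightarrow> (nat \<times> nat) set" where
  "nonadj_dom_pairs n E = {(a, b). dominates n E a b \<and> \<not> adj E a b}"

definition aas :: "(nat \<Rightarrow> real) \<Rightarrow> (nat \<Rightarrow> nat set set \<Rightarrow> bool) \<Rightarrow> bool" where
  "aas p P \<longleftrightarrow> ((\<lambda>n. gnp_prob n (p n) (P n)) \<longlongrightarrow> 1) sequentially"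

end

theory Submission
  imports Defs "HOL-Real_Asymp.Real_Asymp"
begin


definition WG :: "'a set \<Rightarrow> real \<Rightarrow> 'a set \<Rightarrow> real" where
  "WG U p F = p ^ card F * (1 - p) ^ (card U - card F)"

definition ExG :: "'a set \<Rightarrow> real \<Rightarrow> ('a set \<Rightarrow> real) \<Rightarrow> real" where
  "ExG U p f = (\<Sum>F\<in>Pow U. WG U p F * f F)"

lemma W_nonneg: "0 \<le> p \<Longrightarrow> p \<le> 1 \<Longrightarrow> 0 \<le> WG U p F"
  by (simp add: WG_def)

lemma W_Un:
  assumes "finite A" "finite B" "A \<inter> B = {}" "F \<subseteq> A" "G \<subseteq> B"
  shows "WG (A \<union> B) p (F \<union> G) = WG A p F * WG B p G"
proof -
  have fF: "finite F" "finite G" using assms(1,2,4,5) by (auto intro: finite_subset)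
  have c1: "card (F \<union> G) = card F + card G"
    by (rule card_Un_disjoint) (use fF assms in auto)
  have c2: "card (A \<union> B) = card A + card B" using assms card_Un_disjoint by blast
  have l1: "card F \<le> card A" "card G \<le> card B" using assms(1,2,4,5) by (simp_all add: card_mono)
  have "card (A \<union> B) - card (F \<union> G) = (card A - card F) + (card B - card G)"
    using c1 c2 l1 by simp
  thus ?thesis unfolding WG_def c1 by (simp add: power_add)
qed

lemma Ex_split:
  assumes "finite A" "finite B" "A \<inter> B = {}"
  shows "ExG (A \<union> B) p h = (\<Sum>F\<in>Pow A. \<Sum>G\<in>Pow B. WG A p F * WG B p G * h (F \<union> G))"
proof -
  have inj: "inj_on (\<lambda>(F,G). F \<union> G) (Pow A \<times> Pow B)"
  proof (rule inj_onI, clarsimp)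
    fix F G F' G' assume "F \<subseteq> A" "G \<subseteq> B" "F' \<subseteq> A" "G' \<subseteq> B" "F \<union> G = F' \<union> G'"
    thus "F = F' \<and> G = G'" using assms(3) by blast
  qed
  have img: "(\<lambda>(F,G). F \<union> G) ` (Pow A \<times> Pow B) = Pow (A \<union> B)"
  proof (rule set_eqI, rule iffI)
    fix X assume "X \<in> Pow (A \<union> B)"
    hence "X = (X \<inter> A) \<union> (X \<inter> B)" "(X \<inter> A, X \<inter> B) \<in> Pow A \<times> Pow B" by auto
    thus "X \<in> (\<lambda>(F,G). F \<union> G) ` (Pow A \<times> Pow B)" by (metis (no_types, lifting) case_prod_conv image_eqI)
  qed auto
  have "ExG (A \<union> B) p h = (\<Sum>X\<in>(\<lambda>(F,G). F \<union> G) ` (Pow A \<times> Pow B). WG (A \<union> B) p X * h X)"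
    unfolding ExG_def img ..
  also have "\<dots> = (\<Sum>(F,G)\<in>Pow A \<times> Pow B. WG (A \<union> B) p (F \<union> G) * h (F \<union> G))"
    by (subst sum.reindex[OF inj]) (simp add: case_prod_beta)
  also have "\<dots> = (\<Sum>(F,G)\<in>Pow A \<times> Pow B. WG A p F * WG B p G * h (F \<union> G))"
    by (rule sum.cong) (auto simp: W_Un assms)
  also have "\<dots> = (\<Sum>F\<in>Pow A. \<Sum>G\<in>Pow B. WG A p F * WG B p G * h (F \<union> G))"
    by (rule sum.cartesian_product[symmetric])
  finally show ?thesis .
qed

lemma W_total: "finite A \<Longrightarrow> (\<Sum>F\<in>Pow A. WG A p F) = 1"
proof (induction A rule: finite_induct)
  case empty
  then show ?case by (simp add: WG_def)
next
  case (insert x A)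
  have sp: "ExG (A \<union> {x}) p (\<lambda>_. 1) = (\<Sum>F\<in>Pow A. \<Sum>G\<in>Pow {x}. WG A p F * WG {x} p G * 1)"
    by (rule Ex_split) (use insert.hyps in auto)
  have ix: "A \<union> {x} = insert x A" by auto
  have "ExG (insert x A) p (\<lambda>_. 1) = (\<Sum>F\<in>Pow A. \<Sum>G\<in>Pow {x}. WG A p F * WG {x} p G * 1)"
    using sp unfolding ix .
  also have "\<dots> = (\<Sum>F\<in>Pow A. WG A p F * (\<Sum>G\<in>Pow {x}. WG {x} p G))"
    by (simp only: mult_1_right sum_distrib_left)
  also have "(\<Sum>G\<in>Pow {x}. WG {x} p G) = 1"
  proof -
    have "Pow {x} = {{}, {x}}" by blast
    thus ?thesis by (simp add: WG_def)
  qed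
  finally have "ExG (insert x A) p (\<lambda>_. 1) = 1" using insert.IH by simp
  thus ?case by (simp only: ExG_def mult_1_right)
qed

lemma Ex_const: "finite A \<Longrightarrow> ExG A p (\<lambda>_. c) = c"
  unfolding ExG_def by (simp add: sum_distrib_right[symmetric] W_total)

lemma Ex_marginal:
  assumes "finite U" "V \<subseteq> U"
  shows "ExG U p (\<lambda>E. h (E \<inter> V)) = ExG V p h"
proof -
  have U: "U = V \<union> (U - V)" using assms by auto
  have fV: "finite V" using assms finite_subset by auto
  have "ExG U p (\<lambda>E. h (E \<inter> V)) = ExG (V \<union> (U - V)) p (\<lambda>E. h (E \<inter> V))" using U by simp
  also have "\<dots> = (\<Sum>F\<in>Pow V. \<Sum>G\<in>Pow (U-V). WG V p F * WG (U-V) p G * h ((F \<union> G) \<inter> V))"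
    by (rule Ex_split) (use assms fV in auto)
  also have "\<dots> = (\<Sum>F\<in>Pow V. WG V p F * h F * (\<Sum>G\<in>Pow (U-V). WG (U-V) p G))"
  proof (rule sum.cong[OF refl])
    fix F assume F: "F \<in> Pow V"
    have "(\<Sum>G\<in>Pow (U-V). WG V p F * WG (U-V) p G * h ((F \<union> G) \<inter> V))
        = (\<Sum>G\<in>Pow (U-V). WG V p F * h F * WG (U-V) p G)"
    proof (rule sum.cong[OF refl])
      fix G assume "G \<in> Pow (U - V)"
      hence "(F \<union> G) \<inter> V = F" using F by auto
      thus "WG V p F * WG (U-V) p G * h ((F \<union> G) \<inter> V) = WG V p F * h F * WG (U-V) p G" by simp
    qed
    thus "(\<Sum>G\<in>Pow (U-V). WG V p F * WG (U-V) p G * h ((F \<union> G) \<inter> V)) = WG V p F * h F * (\<Sum>G\<in>Pow (U-V). WG (U-V) p G)"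
      by (simp add: sum_distrib_left)
  qed
  also have "\<dots> = ExG V p h" using assms by (simp add: W_total ExG_def)
  finally show ?thesis .
qed

lemma Ex_indep:
  assumes "finite A" "finite B" "A \<inter> B = {}"
  shows "ExG (A \<union> B) p (\<lambda>H. f (H \<inter> A) * g (H \<inter> B)) = ExG A p f * ExG B p g"
proof -
  have "ExG (A \<union> B) p (\<lambda>H. f (H \<inter> A) * g (H \<inter> B)) =
     (\<Sum>F\<in>Pow A. \<Sum>G\<in>Pow B. WG A p F * WG B p G * (f ((F \<union> G) \<inter> A) * g ((F \<union> G) \<inter> B)))"
    by (rule Ex_split[OF assms])
  also have "\<dots> = (\<Sum>F\<in>Pow A. \<Sum>G\<in>Pow B. (WG A p F * f F) * (WG B p G * g G))"
  proof (intro sum.cong refl)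
    fix F G assume "F \<in> Pow A" "G \<in> Pow B"
    hence "(F \<union> G) \<inter> A = F" "(F \<union> G) \<inter> B = G" using assms(3) by auto
    thus "WG A p F * WG B p G * (f ((F \<union> G) \<inter> A) * g ((F \<union> G) \<inter> B)) = (WG A p F * f F) * (WG B p G * g G)"
      by simp
  qed
  also have "\<dots> = ExG A p f * ExG B p g"
    unfolding ExG_def by (simp add: sum_product)
  finally show ?thesis .
qed

lemma Ex_card_eq:
  assumes "finite V"
  shows "ExG V p (\<lambda>F. if card F = k then 1 else 0) = real (card V choose k) * p ^ k * (1 - p) ^ (card V - k)"
proof -
  have "ExG V p (\<lambda>F. if card F = k then 1 else 0) = (\<Sum>F\<in>{B. B \<subseteq> V \<and> card B = k}. WG V p F)"
    unfolding ExG_def by (rule sum.mono_neutral_cong_right) (auto simp: assms)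
  also have "\<dots> = (\<Sum>F\<in>{B. B \<subseteq> V \<and> card B = k}. p ^ k * (1 - p) ^ (card V - k))"
    by (rule sum.cong) (auto simp: WG_def)
  also have "\<dots> = real (card V choose k) * p ^ k * (1 - p) ^ (card V - k)"
    using n_subsets[OF assms, of k] by simp
  finally show ?thesis .
qed

lemma Ex_sum: "ExG U p (\<lambda>E. \<Sum>i\<in>I. f i E) = (\<Sum>i\<in>I. ExG U p (f i))"
  unfolding ExG_def sum_distrib_left by (rule sum.swap)

lemma Ex_add: "ExG U p (\<lambda>E. f E + g E) = ExG U p f + ExG U p g"
  unfolding ExG_def by (simp add: distrib_left sum.distrib)

lemma Ex_cmult: "ExG U p (\<lambda>E. c * f E) = c * ExG U p f"
  unfolding ExG_def by (simp add: sum_distrib_left mult.assoc mult.left_commute)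

lemma Ex_mono: "0 \<le> p \<Longrightarrow> p \<le> 1 \<Longrightarrow> (\<And>E. E \<subseteq> U \<Longrightarrow> f E \<le> g E) \<Longrightarrow> ExG U p f \<le> ExG U p g"
  unfolding ExG_def by (rule sum_mono) (auto intro: mult_left_mono W_nonneg)

lemma Ex_cong: "(\<And>E. E \<subseteq> U \<Longrightarrow> f E = g E) \<Longrightarrow> ExG U p f = ExG U p g"
  unfolding ExG_def by (rule sum.cong) auto




definition starG :: "nat \<Rightarrow> nat \<Rightarrow> nat set set" where
  "starG n b = (\<lambda>c. {b, c}) ` {c. c < n \<and> c \<noteq> b}"

lemma finite_all_edges: "finite (all_edges n)"
proof -
  have "all_edges n \<subseteq> Pow {..<n}" unfolding all_edges_def by auto
  thus ?thesis by (rule finite_subset) auto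
qed

lemma star_sub: "b < n \<Longrightarrow> starG n b \<subseteq> all_edges n"
  unfolding starG_def all_edges_def by auto

lemma finite_star: "finite (starG n b)"
  unfolding starG_def by auto

lemma card_star: "b < n \<Longrightarrow> card (starG n b) = n - 1"
proof -
  assume b: "b < n"
  have "inj_on (\<lambda>c. {b, c}) {c. c < n \<and> c \<noteq> b}"
    by (rule inj_onI) (auto simp: doubleton_eq_iff)
  hence "card (starG n b) = card {c. c < n \<and> c \<noteq> b}" unfolding starG_def by (rule card_image)
  also have "{c. c < n \<and> c \<noteq> b} = {..<n} - {b}" by auto
  also have "card \<dots> = n - 1" using b by simp
  finally show ?thesis .
qed

lemma mem_star: "x \<in> starG n b \<longleftrightarrow> (\<exists>c. c < n \<and> c \<noteq> b \<and> x = {b, c})"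
  unfolding starG_def by auto

definition SS :: "nat \<Rightarrow> nat \<Rightarrow> nat \<Rightarrow> nat set set" where
  "SS n b b' = starG n b - {{b, b'}}"

lemma SS_facts:
  assumes "b < n" "b' < n" "b \<noteq> b'"
  shows "starG n b = {{b,b'}} \<union> SS n b b'"
    and "{b,b'} \<notin> SS n b b'"
    and "SS n b b' \<inter> SS n b' b = {}"
    and "SS n b b' \<inter> starG n b' = {}"
    and "finite (SS n b b')"
    and "card (SS n b b') = n - 2"
    and "SS n b b' \<subseteq> all_edges n"
proof -
  show "starG n b = {{b,b'}} \<union> SS n b b'" using assms unfolding SS_def mem_star by (auto simp: mem_star)
  show "{b,b'} \<notin> SS n b b'" unfolding SS_def by auto
  show "SS n b b' \<inter> SS n b' b = {}" using assms unfolding SS_def by (auto simp: mem_star doubleton_eq_iff)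
  show "SS n b b' \<inter> starG n b' = {}" using assms unfolding SS_def by (auto simp: mem_star doubleton_eq_iff)
  show "finite (SS n b b')" unfolding SS_def using finite_star by auto
  have "{b,b'} \<in> starG n b" using assms by (auto simp: mem_star)
  thus "card (SS n b b') = n - 2" unfolding SS_def using card_star[OF assms(1)] finite_star
    by (simp add: card_Diff_singleton)
  show "SS n b b' \<subseteq> all_edges n" using star_sub[OF assms(1)] unfolding SS_def by auto
qed

definition betaG :: "nat \<Rightarrow> real \<Rightarrow> nat \<Rightarrow> real" where
  "betaG m p k = real (m choose k) * p ^ k * (1 - p) ^ (m - k)"

definition Ik :: "nat \<Rightarrow> nat \<Rightarrow> nat set set \<Rightarrow> nat \<Rightarrow> real" where
  "Ik n k E b = (if card (E \<inter> starG n b) = k then 1 else 0)"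

lemma Ex_Ik: "b < n \<Longrightarrow> ExG (all_edges n) p (\<lambda>E. Ik n k E b) = betaG (n - 1) p k"
proof -
  assume b: "b < n"
  have "ExG (all_edges n) p (\<lambda>E. Ik n k E b) = ExG (starG n b) p (\<lambda>F. if card F = k then 1 else 0)"
    unfolding Ik_def by (rule Ex_marginal[OF finite_all_edges star_sub[OF b]])
  also have "\<dots> = betaG (n - 1) p k" by (simp add: Ex_card_eq finite_star card_star b betaG_def)
  finally show ?thesis .
qed

lemma Ex_shift_card:
  assumes "finite V"
  shows "ExG V p (\<lambda>H. if c + card H = k then 1 else 0) = (if c \<le> k then betaG (card V) p (k - c) else 0)"
proof (cases "c \<le> k")
  case True
  have "ExG V p (\<lambda>H. if c + card H = k then 1 else 0) = ExG V p (\<lambda>H. if card H = k - c then 1 else 0)"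
    by (rule Ex_cong) (use True in auto)
  then show ?thesis using True by (simp add: Ex_card_eq assms betaG_def)
next
  case False
  have "ExG V p (\<lambda>H. if c + card H = k then 1 else 0) = ExG V p (\<lambda>H. 0)"
    by (rule Ex_cong) (use False in auto)
  then show ?thesis using False by (simp add: Ex_const assms)
qed

lemma Pow_single: "Pow {x} = {{}, {x}}" by blast

lemma sum_Pow_single:
  "(\<Sum>F\<in>Pow {x}. WG {x} p F * g F) = (1 - p) * g {} + p * g {x}"
  by (simp add: Pow_single WG_def)

lemma Ex_pair:
  assumes "b < n" "b' < n" "b \<noteq> b'"
  shows "ExG (all_edges n) p (\<lambda>E. Ik n k E b * Ik n k E b') =
     (1 - p) * betaG (n - 2) p k ^ 2 + p * (if k = 0 then 0 else betaG (n - 2) p (k - 1) ^ 2)"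
proof -
  let ?e = "{b, b'}"
  let ?A = "SS n b b'" and ?B = "SS n b' b"
  let ?U = "{?e} \<union> (?A \<union> ?B)"
  note F1 = SS_facts[OF assms]
  have b'b: "b' \<noteq> b" using assms by auto
  note F2 = SS_facts[OF assms(2,1) b'b]
  have e2: "{b', b} = ?e" by auto
  have stb: "starG n b = {?e} \<union> ?A" and stb': "starG n b' = {?e} \<union> ?B" using F1(1) F2(1) e2 by auto
  have U: "?U \<subseteq> all_edges n" using F1(7) F2(7) stb star_sub[OF assms(1)] by auto
  define h where "h F = (if card (F \<inter> starG n b) = k then 1 else 0) * (if card (F \<inter> starG n b') = k then (1::real) else 0)" for F
  have "ExG (all_edges n) p (\<lambda>E. Ik n k E b * Ik n k E b') = ExG (all_edges n) p (\<lambda>E. h (E \<inter> ?U))"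
  proof (rule Ex_cong)
    fix E :: "nat set set"
    have s1: "starG n b \<subseteq> ?U" "starG n b' \<subseteq> ?U" using stb stb' by auto
    have "E \<inter> ?U \<inter> starG n b = E \<inter> starG n b" "E \<inter> ?U \<inter> starG n b' = E \<inter> starG n b'" using s1 by auto
    thus "Ik n k E b * Ik n k E b' = h (E \<inter> ?U)" unfolding h_def Ik_def by simp
  qed
  also have "\<dots> = ExG ?U p h" by (rule Ex_marginal[OF finite_all_edges U])
  also have "\<dots> = (\<Sum>F\<in>Pow {?e}. \<Sum>G\<in>Pow (?A \<union> ?B). WG {?e} p F * WG (?A \<union> ?B) p G * h (F \<union> G))"
    by (rule Ex_split) (use F1 F2 e2 in auto)
  also have "\<dots> = (\<Sum>F\<in>Pow {?e}. WG {?e} p F * ExG (?A \<union> ?B) p (\<lambda>G. h (F \<union> G)))"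
    unfolding ExG_def by (simp add: sum_distrib_left mult.assoc)
  also have "\<dots> = (\<Sum>F\<in>Pow {?e}. WG {?e} p F *
       (ExG ?A p (\<lambda>H. if card F + card H = k then 1 else 0) * ExG ?B p (\<lambda>H. if card F + card H = k then 1 else 0)))"
  proof (rule sum.cong[OF refl])
    fix F assume F: "F \<in> Pow {?e}"
    have "ExG (?A \<union> ?B) p (\<lambda>G. h (F \<union> G)) =
       ExG (?A \<union> ?B) p (\<lambda>G. (\<lambda>H. if card F + card H = k then 1 else 0) (G \<inter> ?A) * (\<lambda>H. if card F + card H = k then 1 else (0::real)) (G \<inter> ?B))"
    proof (rule Ex_cong)
      fix G assume G: "G \<subseteq> ?A \<union> ?B"
      have i1: "(F \<union> G) \<inter> starG n b = F \<union> (G \<inter> ?A)" using F G F1(3,4) F2(3,4) stb by auto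
      have i2: "(F \<union> G) \<inter> starG n b' = F \<union> (G \<inter> ?B)" using F G F1(3,4) F2(3,4) stb' by auto
      have fin: "finite F" "finite (G \<inter> ?A)" "finite (G \<inter> ?B)" using F F1(5) F2(5) by (auto intro: finite_subset)
      have c1: "card (F \<union> (G \<inter> ?A)) = card F + card (G \<inter> ?A)"
        by (rule card_Un_disjoint) (use fin F F1(2) in auto)
      have c2: "card (F \<union> (G \<inter> ?B)) = card F + card (G \<inter> ?B)"
        by (rule card_Un_disjoint) (use fin F F2(2) e2 in auto)
      show "h (F \<union> G) = (\<lambda>H. if card F + card H = k then 1 else 0) (G \<inter> ?A) * (\<lambda>H. if card F + card H = k then 1 else (0::real)) (G \<inter> ?B)"
        unfolding h_def i1 i2 c1 c2 by simp
    qed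
    also have "\<dots> = ExG ?A p (\<lambda>H. if card F + card H = k then 1 else 0) * ExG ?B p (\<lambda>H. if card F + card H = k then 1 else 0)"
      by (rule Ex_indep) (use F1 F2 in auto)
    finally show "WG {?e} p F * ExG (?A \<union> ?B) p (\<lambda>G. h (F \<union> G)) = WG {?e} p F *
       (ExG ?A p (\<lambda>H. if card F + card H = k then 1 else 0) * ExG ?B p (\<lambda>H. if card F + card H = k then 1 else 0))"
      by simp
  qed
  also have "\<dots> = (1 - p) * betaG (n - 2) p k ^ 2 + p * (if k = 0 then 0 else betaG (n - 2) p (k - 1) ^ 2)"
    by (simp add: sum_Pow_single Ex_shift_card F1(5,6) F2(5,6) power2_eq_square)
  finally show ?thesis .
qed




definition Xk :: "nat \<Rightarrow> nat \<Rightarrow> nat set set \<Rightarrow> real" where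
  "Xk n k E = (\<Sum>b<n. Ik n k E b)"

lemma Ex_Xk: "ExG (all_edges n) p (Xk n k) = real n * betaG (n - 1) p k"
  unfolding Xk_def by (simp add: Ex_sum Ex_Ik)

definition PairG :: "nat \<Rightarrow> real \<Rightarrow> nat \<Rightarrow> real" where
  "PairG n p k = (1 - p) * betaG (n - 2) p k ^ 2 + p * (if k = 0 then 0 else betaG (n - 2) p (k - 1) ^ 2)"

lemma Ik_sq: "Ik n k E b * Ik n k E b = Ik n k E b" by (simp add: Ik_def)

lemma Ex_Xk2: "ExG (all_edges n) p (\<lambda>E. Xk n k E ^ 2) = real n * betaG (n - 1) p k + real n * (real n - 1) * PairG n p k"
proof -
  have "ExG (all_edges n) p (\<lambda>E. Xk n k E ^ 2) = ExG (all_edges n) p (\<lambda>E. \<Sum>b<n. \<Sum>b'<n. Ik n k E b * Ik n k E b')"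
    unfolding Xk_def power2_eq_square sum_product ..
  also have "\<dots> = (\<Sum>b<n. \<Sum>b'<n. ExG (all_edges n) p (\<lambda>E. Ik n k E b * Ik n k E b'))"
    by (simp add: Ex_sum)
  also have "\<dots> = (\<Sum>b<n. betaG (n - 1) p k + (real n - 1) * PairG n p k)"
  proof (rule sum.cong[OF refl])
    fix b assume b: "b \<in> {..<n}"
    have "(\<Sum>b'<n. ExG (all_edges n) p (\<lambda>E. Ik n k E b * Ik n k E b')) =
       ExG (all_edges n) p (\<lambda>E. Ik n k E b * Ik n k E b) + (\<Sum>b'\<in>{..<n} - {b}. ExG (all_edges n) p (\<lambda>E. Ik n k E b * Ik n k E b'))"
      using b by (simp add: sum.remove)
    also have "(\<Sum>b'\<in>{..<n} - {b}. ExG (all_edges n) p (\<lambda>E. Ik n k E b * Ik n k E b')) = (\<Sum>b'\<in>{..<n} - {b}. PairG n p k)"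
      by (rule sum.cong[OF refl]) (use b in \<open>auto simp: Ex_pair PairG_def\<close>)
    also have "\<dots> = (real n - 1) * PairG n p k" using b by (simp add: of_nat_diff)
    finally show "(\<Sum>b'<n. ExG (all_edges n) p (\<lambda>E. Ik n k E b * Ik n k E b')) = betaG (n - 1) p k + (real n - 1) * PairG n p k"
      using b by (simp add: Ik_sq Ex_Ik)
  qed
  also have "\<dots> = real n * betaG (n - 1) p k + real n * (real n - 1) * PairG n p k"
    by (simp add: distrib_left)
  finally show ?thesis .
qed

definition isoI :: "nat \<Rightarrow> nat set set \<Rightarrow> nat \<Rightarrow> nat \<Rightarrow> real" where
  "isoI n E b c = (if {b, c} \<in> E \<and> E \<inter> SS n b c = {} \<and> E \<inter> SS n c b = {} then 1 else 0)"

lemma Ex_empty: "finite V \<Longrightarrow> ExG V p (\<lambda>H. if H = {} then 1 else 0) = (1 - p) ^ card V"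
proof -
  assume f: "finite V"
  have "ExG V p (\<lambda>H. if H = {} then 1 else 0) = ExG V p (\<lambda>H. if card H = 0 then 1 else 0)"
  proof (rule Ex_cong)
    fix H assume "H \<subseteq> V"
    hence "finite H" using f finite_subset by auto
    thus "(if H = {} then 1 else 0) = (if card H = 0 then 1 else (0::real))" by simp
  qed
  thus ?thesis by (simp add: Ex_card_eq f)
qed

lemma Ex_isoI:
  assumes "b < n" "c < n" "b \<noteq> c"
  shows "ExG (all_edges n) p (\<lambda>E. isoI n E b c) = p * ((1 - p) ^ (n - 2)) ^ 2"
proof -
  let ?e = "{b, c}"
  let ?A = "SS n b c" and ?B = "SS n c b"
  let ?U = "{?e} \<union> (?A \<union> ?B)"
  note F1 = SS_facts[OF assms]
  have cb: "c \<noteq> b" using assms by auto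
  note F2 = SS_facts[OF assms(2,1) cb]
  have e2: "{c, b} = ?e" by auto
  have U: "?U \<subseteq> all_edges n" using F1(7) F2(7) F1(1) star_sub[OF assms(1)] by auto
  define f where "f G = (if ?e \<in> G then 1 else (0::real))" for G
  define g1 where "g1 H = (if H = {} then 1 else (0::real))" for H :: "nat set set"
  define h where "h F = f (F \<inter> {?e}) * ((\<lambda>H. g1 (H \<inter> ?A) * g1 (H \<inter> ?B)) (F \<inter> (?A \<union> ?B)))" for F
  have "ExG (all_edges n) p (\<lambda>E. isoI n E b c) = ExG (all_edges n) p (\<lambda>E. h (E \<inter> ?U))"
  proof (rule Ex_cong)
    fix E :: "nat set set"
    have "E \<inter> ?U \<inter> {?e} = E \<inter> {?e}" "E \<inter> ?U \<inter> (?A \<union> ?B) \<inter> ?A = E \<inter> ?A"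
         "E \<inter> ?U \<inter> (?A \<union> ?B) \<inter> ?B = E \<inter> ?B" by auto
    thus "isoI n E b c = h (E \<inter> ?U)" unfolding h_def f_def g1_def isoI_def by auto
  qed
  also have "\<dots> = ExG ?U p h" by (rule Ex_marginal[OF finite_all_edges U])
  also have "\<dots> = ExG {?e} p f * ExG (?A \<union> ?B) p (\<lambda>H. g1 (H \<inter> ?A) * g1 (H \<inter> ?B))"
    unfolding h_def by (rule Ex_indep) (use F1 F2 e2 in auto)
  also have "ExG (?A \<union> ?B) p (\<lambda>H. g1 (H \<inter> ?A) * g1 (H \<inter> ?B)) = ExG ?A p g1 * ExG ?B p g1"
    by (rule Ex_indep) (use F1 F2 in auto)
  also have "ExG {?e} p f = p" unfolding ExG_def f_def by (simp add: sum_Pow_single)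
  finally show ?thesis using F1(5,6) F2(5,6) by (simp add: g1_def Ex_empty power2_eq_square)
qed

definition Kc :: "nat \<Rightarrow> nat set set \<Rightarrow> real" where
  "Kc n E = (\<Sum>b<n. \<Sum>c\<in>{..<n} - {b}. isoI n E b c)"

lemma Ex_Kc: "ExG (all_edges n) p (Kc n) = real n * (real n - 1) * (p * ((1 - p) ^ (n - 2)) ^ 2)"
proof -
  have "ExG (all_edges n) p (Kc n) = (\<Sum>b<n. \<Sum>c\<in>{..<n} - {b}. p * ((1 - p) ^ (n - 2)) ^ 2)"
    unfolding Kc_def Ex_sum by (intro sum.cong refl) (auto simp: Ex_isoI)
  also have "\<dots> = (\<Sum>b<n. (real n - 1) * (p * ((1 - p) ^ (n - 2)) ^ 2))"
    by (intro sum.cong refl) (simp add: of_nat_diff)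
  finally show ?thesis by simp
qed

lemma gnp_Ex: "gnp_prob n p P = ExG (all_edges n) p (\<lambda>E. if P E then 1 else 0)"
  unfolding gnp_prob_def ExG_def WG_def by (rule sum.cong) auto

lemma gnp_le1: "0 \<le> p \<Longrightarrow> p \<le> 1 \<Longrightarrow> gnp_prob n p P \<le> 1"
proof -
  assume p: "0 \<le> p" "p \<le> 1"
  have "gnp_prob n p P \<le> ExG (all_edges n) p (\<lambda>_. 1)"
    unfolding gnp_Ex by (rule Ex_mono[OF p]) auto
  thus ?thesis by (simp add: Ex_const finite_all_edges)
qed

lemma gnp_markov:
  assumes p: "0 \<le> p" "p \<le> 1" and t: "t > 0" and X: "\<And>E. E \<subseteq> all_edges n \<Longrightarrow> 0 \<le> X E"
  shows "gnp_prob n p (\<lambda>E. t \<le> X E) \<le> ExG (all_edges n) p X / t"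
proof -
  have "t * gnp_prob n p (\<lambda>E. t \<le> X E) = ExG (all_edges n) p (\<lambda>E. t * (if t \<le> X E then 1 else 0))"
    unfolding gnp_Ex Ex_cmult ..
  also have "\<dots> \<le> ExG (all_edges n) p X"
    by (rule Ex_mono[OF p]) (use X in auto)
  finally show ?thesis using t by (simp add: field_simps)
qed

lemma gnp_cheb:
  assumes p: "0 \<le> p" "p \<le> 1" and mu: "ExG (all_edges n) p X = \<mu>" "\<mu> > 0"
     and s: "ExG (all_edges n) p (\<lambda>E. X E ^ 2) = s"
  shows "gnp_prob n p (\<lambda>E. X E < \<mu> / 2) \<le> 4 * (s - \<mu> ^ 2) / \<mu> ^ 2"
proof -
  have "ExG (all_edges n) p (\<lambda>E. (X E - \<mu>) ^ 2) = ExG (all_edges n) p (\<lambda>E. X E ^ 2 + (-2 * \<mu>) * X E + \<mu> ^ 2)"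
    by (rule Ex_cong) (simp add: power2_eq_square algebra_simps)
  also have "\<dots> = ExG (all_edges n) p (\<lambda>E. X E ^ 2 + (-2 * \<mu>) * X E) + ExG (all_edges n) p (\<lambda>E. \<mu> ^ 2)"
    by (rule Ex_add)
  also have "ExG (all_edges n) p (\<lambda>E. X E ^ 2 + (-2 * \<mu>) * X E) = s + (-2 * \<mu>) * \<mu>"
    unfolding Ex_add Ex_cmult s mu ..
  also have "ExG (all_edges n) p (\<lambda>E. \<mu> ^ 2) = \<mu> ^ 2" by (simp add: Ex_const finite_all_edges)
  also have "s + (-2 * \<mu>) * \<mu> + \<mu> ^ 2 = s - \<mu> ^ 2" by (simp add: power2_eq_square)
  finally have v: "ExG (all_edges n) p (\<lambda>E. (X E - \<mu>) ^ 2) = s - \<mu> ^ 2" .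
  have "(\<mu> ^ 2 / 4) * gnp_prob n p (\<lambda>E. X E < \<mu> / 2) = ExG (all_edges n) p (\<lambda>E. (\<mu> ^ 2 / 4) * (if X E < \<mu> / 2 then 1 else 0))"
    unfolding gnp_Ex Ex_cmult ..
  also have "\<dots> \<le> ExG (all_edges n) p (\<lambda>E. (X E - \<mu>) ^ 2)"
  proof (rule Ex_mono[OF p])
    fix E
    show "(\<mu> ^ 2 / 4) * (if X E < \<mu> / 2 then 1 else 0) \<le> (X E - \<mu>) ^ 2"
    proof (cases "X E < \<mu> / 2")
      case True
      hence "\<mu> / 2 \<le> \<mu> - X E" "0 \<le> \<mu> / 2" using mu by auto
      hence "(\<mu> / 2) ^ 2 \<le> (\<mu> - X E) ^ 2" by (rule power_mono)
      thus ?thesis using True by (simp add: power2_eq_square algebra_simps)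
    qed simp
  qed
  finally show ?thesis using v mu by (simp add: field_simps)
qed

lemma gnp_union:
  assumes p: "0 \<le> p" "p \<le> 1" and h: "\<And>E. E \<subseteq> all_edges n \<Longrightarrow> P E \<or> A E \<or> B E"
  shows "1 - gnp_prob n p A - gnp_prob n p B \<le> gnp_prob n p P"
proof -
  have "ExG (all_edges n) p (\<lambda>E. 1 + (-1) * (if A E then 1 else 0) + (-1) * (if B E then 1 else 0)) \<le> gnp_prob n p P"
    unfolding gnp_Ex
  proof (rule Ex_mono[OF p])
    fix E assume "E \<subseteq> all_edges n"
    hence "P E \<or> A E \<or> B E" by (rule h)
    thus "1 + (-1) * (if A E then 1 else 0) + (-1) * (if B E then 1 else 0) \<le> (if P E then 1 else (0::real))"
      by auto
  qed
  thus ?thesis unfolding Ex_add Ex_cmult by (simp add: Ex_const finite_all_edges gnp_Ex)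
qed




lemma Xk_card: "Xk n k E = real (card {b \<in> {..<n}. card (E \<inter> starG n b) = k})"
proof -
  have "Xk n k E = (\<Sum>b\<in>{b \<in> {..<n}. card (E \<inter> starG n b) = k}. 1)"
    unfolding Xk_def Ik_def by (rule sum.inter_filter[symmetric]) simp
  thus ?thesis by simp
qed

lemma card_le_pairs:
  assumes "finite S" "\<And>b. b \<in> A \<Longrightarrow> \<exists>a. (a, b) \<in> S"
  shows "card A \<le> card S"
proof -
  define f where "f b = (SOME a. (a, b) \<in> S, b)" for b
  have inj: "inj_on f A" unfolding f_def by (rule inj_onI) simp
  have sub: "f ` A \<subseteq> S"
  proof
    fix y assume "y \<in> f ` A"
    then obtain b where b: "b \<in> A" "y = f b" by auto
    from assms(2)[OF b(1)] have "(SOME a. (a, b) \<in> S, b) \<in> S" by (rule someI_ex)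
    thus "y \<in> S" using b f_def by simp
  qed
  have "card A = card (f ` A)" using inj by (simp add: card_image)
  also have "\<dots> \<le> card S" using sub assms(1) by (rule card_mono[rotated])
  finally show ?thesis .
qed

lemma finite_adp: "finite (adj_dom_pairs n E)"
proof -
  have "adj_dom_pairs n E \<subseteq> {..<n} \<times> {..<n}" unfolding adj_dom_pairs_def dominates_def by auto
  thus ?thesis by (rule finite_subset) auto
qed

lemma finite_nadp: "finite (nonadj_dom_pairs n E)"
proof -
  have "nonadj_dom_pairs n E \<subseteq> {..<n} \<times> {..<n}" unfolding nonadj_dom_pairs_def dominates_def by auto
  thus ?thesis by (rule finite_subset) auto
qed

lemma leaf:
  assumes "b < n" "card (E \<inter> starG n b) = 1"
  obtains c where "c < n" "c \<noteq> b" "E \<inter> starG n b = {{b, c}}" "\<And>x. x < n \<Longrightarrow> adj E b x \<Longrightarrow> x = c"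
proof -
  obtain s where s: "E \<inter> starG n b = {s}" using assms(2) by (rule card_1_singletonE)
  hence "s \<in> starG n b" by auto
  then obtain c where c: "c < n" "c \<noteq> b" "s = {b, c}" unfolding mem_star by blast
  have "x = c" if "x < n" "adj E b x" for x
  proof -
    have xb: "x \<noteq> b" using that(2) by (auto simp: adj_def)
    have "{b, x} \<in> starG n b" unfolding mem_star using that(1) xb by blast
    moreover have "{b, x} \<in> E" using that by (simp add: adj_def)
    ultimately have "{b, x} \<in> E \<inter> starG n b" by blast
    hence "{b, x} = {b, c}" using s c by simp
    hence "x \<in> {b, c}" by (metis insertI1 insert_commute)
    thus ?thesis using xb by blast
  qed
  thus ?thesis using that c s by blast
qed

lemma C1: "Xk n 1 E \<le> real (card (adj_dom_pairs n E))"
proof -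
  have "card {b \<in> {..<n}. card (E \<inter> starG n b) = 1} \<le> card (adj_dom_pairs n E)"
  proof (rule card_le_pairs[OF finite_adp])
    fix b assume "b \<in> {b \<in> {..<n}. card (E \<inter> starG n b) = 1}"
    hence b: "b < n" "card (E \<inter> starG n b) = 1" by auto
    obtain c where c: "c < n" "c \<noteq> b" "E \<inter> starG n b = {{b, c}}" "\<And>x. x < n \<Longrightarrow> adj E b x \<Longrightarrow> x = c"
      using leaf[OF b] by blast
    have cb: "{c, b} = {b, c}" by (rule insert_commute)
    have "{b, c} \<in> E" using c(3) by blast
    hence ad: "adj E c b" unfolding adj_def cb using c(2) by blast
    have "dominates n E c b" unfolding dominates_def using b c by blast
    hence "(c, b) \<in> adj_dom_pairs n E" using ad unfolding adj_dom_pairs_def by simp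
    thus "\<exists>a. (a, b) \<in> adj_dom_pairs n E" by blast
  qed
  thus ?thesis by (simp add: Xk_card)
qed

lemma C2: "2 \<le> n \<Longrightarrow> Xk n 0 E \<le> real (card (nonadj_dom_pairs n E))"
proof -
  assume n: "2 \<le> n"
  have "card {b \<in> {..<n}. card (E \<inter> starG n b) = 0} \<le> card (nonadj_dom_pairs n E)"
  proof (rule card_le_pairs[OF finite_nadp])
    fix b assume "b \<in> {b \<in> {..<n}. card (E \<inter> starG n b) = 0}"
    hence b: "b < n" "card (E \<inter> starG n b) = 0" by auto
    have em: "E \<inter> starG n b = {}" using b(2) finite_star by auto
    define a where "a = (if b = 0 then 1 else (0::nat))"
    have a: "a < n" "a \<noteq> b" using n unfolding a_def by auto
    have na: "\<not> adj E b x" if "x < n" for x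
    proof
      assume ax: "adj E b x"
      hence xb: "x \<noteq> b" "{b, x} \<in> E" by (auto simp: adj_def)
      have "{b, x} \<in> starG n b" unfolding mem_star using that xb by blast
      thus False using em xb by blast
    qed
    have ab: "{a, b} = {b, a}" by (rule insert_commute)
    have "\<not> adj E a b" using na[OF a(1)] unfolding adj_def ab using a by blast
    moreover have "dominates n E a b" unfolding dominates_def using b a na by blast
    ultimately have "(a, b) \<in> nonadj_dom_pairs n E" unfolding nonadj_dom_pairs_def by simp
    thus "\<exists>a. (a, b) \<in> nonadj_dom_pairs n E" by blast
  qed
  thus ?thesis by (simp add: Xk_card)
qed

lemma C3: "Xk n 1 E \<le> real (card (nonadj_dom_pairs n E)) + Kc n E"
proof -
  define A1 where "A1 = {b \<in> {..<n}. card (E \<inter> starG n b) = 1 \<and> (\<forall>c\<in>{..<n} - {b}. isoI n E b c = 0)}"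
  have isoI01: "0 \<le> isoI n E b c" for b c by (simp add: isoI_def)
  have pw: "Ik n 1 E b \<le> (if b \<in> A1 then 1 else 0) + (\<Sum>c\<in>{..<n} - {b}. isoI n E b c)" if b: "b < n" for b
  proof (cases "card (E \<inter> starG n b) = 1 \<and> (\<forall>c\<in>{..<n} - {b}. isoI n E b c = 0)")
    case True
    thus ?thesis using b by (simp add: A1_def Ik_def sum_nonneg isoI01)
  next
    case False
    show ?thesis
    proof (cases "card (E \<inter> starG n b) = 1")
      case True
      with False obtain c where c: "c \<in> {..<n} - {b}" "isoI n E b c \<noteq> 0" by auto
      hence "isoI n E b c = 1" by (simp add: isoI_def split: if_splits)
      moreover have "isoI n E b c \<le> (\<Sum>c\<in>{..<n} - {b}. isoI n E b c)"
        by (rule member_le_sum) (use c isoI01 in auto)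
      ultimately show ?thesis by (simp add: Ik_def A1_def)
    next
      case False
      thus ?thesis by (simp add: Ik_def A1_def sum_nonneg isoI01)
    qed
  qed
  have "Xk n 1 E \<le> (\<Sum>b<n. (if b \<in> A1 then 1 else 0) + (\<Sum>c\<in>{..<n} - {b}. isoI n E b c))"
    unfolding Xk_def by (rule sum_mono) (use pw in auto)
  also have "\<dots> = real (card A1) + Kc n E"
  proof -
    have "(\<Sum>b<n. (if b \<in> A1 then 1 else 0::real)) = real (card A1)"
    proof -
      have "A1 \<subseteq> {..<n}" unfolding A1_def by auto
      hence "A1 = {b \<in> {..<n}. b \<in> A1}" by auto
      hence "card A1 = card {b \<in> {..<n}. b \<in> A1}" by simp
      moreover have "(\<Sum>b<n. (if b \<in> A1 then 1 else 0::real)) = (\<Sum>b\<in>{b \<in> {..<n}. b \<in> A1}. 1)"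
        by (rule sum.inter_filter[symmetric]) simp
      ultimately show ?thesis by simp
    qed
    thus ?thesis by (simp add: sum.distrib Kc_def)
  qed
  also have "card A1 \<le> card (nonadj_dom_pairs n E)"
  proof (rule card_le_pairs[OF finite_nadp])
    fix b assume bA: "b \<in> A1"
    hence b: "b < n" "card (E \<inter> starG n b) = 1" and ni: "\<forall>c\<in>{..<n} - {b}. isoI n E b c = 0"
      unfolding A1_def by auto
    obtain c where c: "c < n" "c \<noteq> b" "E \<inter> starG n b = {{b, c}}" "\<And>x. x < n \<Longrightarrow> adj E b x \<Longrightarrow> x = c"
      using leaf[OF b] by blast
    have bc: "b \<noteq> c" using c by auto
    note F1 = SS_facts[OF b(1) c(1) bc]
    have e: "{b, c} \<in> E" using c(3) by blast
    have e1: "E \<inter> SS n b c = {}" using c(3) unfolding SS_def by blast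
    have "isoI n E b c = 0" using ni c by auto
    hence "\<not> ({b, c} \<in> E \<and> E \<inter> SS n b c = {} \<and> E \<inter> SS n c b = {})" unfolding isoI_def by argo
    hence "E \<inter> SS n c b \<noteq> {}" using e e1 by blast
    then obtain x where x: "x \<in> E" "x \<in> SS n c b" by auto
    hence xs: "x \<in> starG n c" "x \<noteq> {c, b}" unfolding SS_def by auto
    then obtain a where a0: "a < n" "a \<noteq> c" "x = {c, a}" "x \<noteq> {c, b}"
      unfolding mem_star by blast
    have "a \<noteq> b" using a0 by blast
    note a = a0(1-3) this
    have nab: "\<not> adj E a b"
    proof
      assume "adj E a b"
      hence "{a, b} \<in> E" by (simp add: adj_def)
      hence "{b, a} \<in> E" by (simp add: insert_commute)
      moreover have "{b, a} \<in> starG n b" unfolding mem_star using a by blast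
      ultimately have "{b, a} \<in> E \<inter> starG n b" by blast
      hence "{b, a} = {b, c}" using c(3) by simp
      hence "a \<in> {b, c}" by (metis insertI1 insert_commute)
      thus False using a by blast
    qed
    have "{a, c} \<in> E" using a x by (simp add: insert_commute)
    hence "adj E a c" using a by (simp add: adj_def)
    hence "dominates n E a b" unfolding dominates_def using a b c(4) by blast
    hence "(a, b) \<in> nonadj_dom_pairs n E" using nab unfolding nonadj_dom_pairs_def by auto
    thus "\<exists>a. (a, b) \<in> nonadj_dom_pairs n E" by blast
  qed
  finally show ?thesis by simp
qed




definition compG :: "nat \<Rightarrow> nat set set \<Rightarrow> nat set set" where
  "compG n E = all_edges n - E"

lemma gnp_comp: "gnp_prob n p (\<lambda>E. P (compG n E)) = gnp_prob n (1 - p) P"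
proof -
  let ?N = "all_edges n"
  have bij: "bij_betw (compG n) (Pow ?N) (Pow ?N)"
    by (rule bij_betwI[where g="compG n"]) (auto simp: compG_def)
  have fin: "finite ?N" by (rule finite_all_edges)
  have "gnp_prob n (1 - p) P = (\<Sum>E\<in>Pow ?N. (if P E then (1 - p) ^ card E * (1 - (1 - p)) ^ (card ?N - card E) else 0))"
    unfolding gnp_prob_def ..
  also have "\<dots> = (\<Sum>F\<in>Pow ?N. (if P (compG n F) then (1 - p) ^ card (compG n F) * (1 - (1 - p)) ^ (card ?N - card (compG n F)) else 0))"
    by (rule sum.reindex_bij_betw[OF bij, symmetric])
  also have "\<dots> = gnp_prob n p (\<lambda>E. P (compG n E))"
    unfolding gnp_prob_def
  proof (rule sum.cong[OF refl])
    fix F assume F: "F \<in> Pow ?N"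
    have fF: "finite F" using F fin finite_subset by auto
    have c: "card (compG n F) = card ?N - card F" unfolding compG_def using F fF by (simp add: card_Diff_subset)
    have le: "card F \<le> card ?N" using F fin by (simp add: card_mono)
    have c2: "card ?N - card (compG n F) = card F" using c le by simp
    show "(if P (compG n F) then (1 - p) ^ card (compG n F) * (1 - (1 - p)) ^ (card ?N - card (compG n F)) else 0) =
        (if P (compG n F) then p ^ card F * (1 - p) ^ (card ?N - card F) else 0)"
      unfolding c2 unfolding c by simp
  qed
  finally show ?thesis ..
qed

lemma adj_comp: "a < n \<Longrightarrow> b < n \<Longrightarrow> adj (compG n E) a b \<longleftrightarrow> a \<noteq> b \<and> \<not> adj E a b"
  unfolding adj_def compG_def all_edges_def by blast

lemma adj_sym: "adj E a b \<longleftrightarrow> adj E b a"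
  unfolding adj_def by (auto simp: insert_commute)

lemma dom_comp: "dominates n (compG n E) a b \<longleftrightarrow> dominates n E b a"
proof
  assume d: "dominates n (compG n E) a b"
  hence ab: "a < n" "b < n" "a \<noteq> b" unfolding dominates_def by auto
  have "c = b \<or> adj E b c" if c: "c < n" "adj E a c" for c
  proof (rule ccontr)
    assume "\<not> (c = b \<or> adj E b c)"
    hence cb: "c \<noteq> b" "\<not> adj E b c" by auto
    have ca: "c \<noteq> a" using c(2) by (auto simp: adj_def)
    have "adj (compG n E) b c" using adj_comp[OF ab(2) c(1)] cb by simp
    hence "c = a \<or> adj (compG n E) a c" using d c(1) unfolding dominates_def by blast
    thus False using ca adj_comp[OF ab(1) c(1)] c(2) by simp
  qed
  thus "dominates n E b a" unfolding dominates_def using ab by auto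
next
  assume d: "dominates n E b a"
  hence ab: "a < n" "b < n" "a \<noteq> b" unfolding dominates_def by auto
  have "c = a \<or> adj (compG n E) a c" if c: "c < n" "adj (compG n E) b c" for c
  proof (rule ccontr)
    assume h: "\<not> (c = a \<or> adj (compG n E) a c)"
    hence ca: "c \<noteq> a" by auto
    hence "adj E a c" using h adj_comp[OF ab(1) c(1)] by simp
    hence "c = b \<or> adj E b c" using d c(1) unfolding dominates_def by blast
    thus False using c(2) adj_comp[OF ab(2) c(1)] by auto
  qed
  thus "dominates n (compG n E) a b" unfolding dominates_def using ab by auto
qed

lemma swap_mem: "(a, b) \<in> prod.swap ` S \<longleftrightarrow> (b, a) \<in> S"
  by force

lemma adj_comp_dom: "dominates n E b a \<Longrightarrow> adj (compG n E) a b \<longleftrightarrow> \<not> adj E b a"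
proof -
  assume "dominates n E b a"
  hence ab: "a < n" "b < n" "a \<noteq> b" unfolding dominates_def by auto
  show ?thesis using adj_comp[OF ab(1,2), of E] adj_sym[of E a b] ab(3) by blast
qed

lemma adp_comp: "adj_dom_pairs n (compG n E) = prod.swap ` nonadj_dom_pairs n E"
proof (rule set_eqI)
  fix x :: "nat \<times> nat"
  obtain a b where x: "x = (a, b)" by fastforce
  have "x \<in> adj_dom_pairs n (compG n E) \<longleftrightarrow> dominates n E b a \<and> adj (compG n E) a b"
    unfolding x adj_dom_pairs_def by (simp add: dom_comp)
  also have "\<dots> \<longleftrightarrow> dominates n E b a \<and> \<not> adj E b a" using adj_comp_dom by blast
  also have "\<dots> \<longleftrightarrow> x \<in> prod.swap ` nonadj_dom_pairs n E"
    unfolding x swap_mem nonadj_dom_pairs_def by simp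
  finally show "x \<in> adj_dom_pairs n (compG n E) \<longleftrightarrow> x \<in> prod.swap ` nonadj_dom_pairs n E" .
qed

lemma nadp_comp: "nonadj_dom_pairs n (compG n E) = prod.swap ` adj_dom_pairs n E"
proof (rule set_eqI)
  fix x :: "nat \<times> nat"
  obtain a b where x: "x = (a, b)" by fastforce
  have "x \<in> nonadj_dom_pairs n (compG n E) \<longleftrightarrow> dominates n E b a \<and> \<not> adj (compG n E) a b"
    unfolding x nonadj_dom_pairs_def by (simp add: dom_comp)
  also have "\<dots> \<longleftrightarrow> dominates n E b a \<and> adj E b a" using adj_comp_dom by blast
  also have "\<dots> \<longleftrightarrow> x \<in> prod.swap ` adj_dom_pairs n E"
    unfolding x swap_mem adj_dom_pairs_def by simp
  finally show "x \<in> nonadj_dom_pairs n (compG n E) \<longleftrightarrow> x \<in> prod.swap ` adj_dom_pairs n E" .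
qed

lemma card_adp_comp: "card (adj_dom_pairs n (compG n E)) = card (nonadj_dom_pairs n E)"
  unfolding adp_comp by (rule card_image) (rule inj_swap)

lemma card_nadp_comp: "card (nonadj_dom_pairs n (compG n E)) = card (adj_dom_pairs n E)"
  unfolding nadp_comp by (rule card_image) (rule inj_swap)




lemma q_ineq: "0 \<le> (p::real) \<Longrightarrow> p \<le> 1/2 \<Longrightarrow> 1 \<le> (1 - p) * (1 + 2 * p)"
proof -
  assume p: "0 \<le> p" "p \<le> 1/2"
  have "0 \<le> p * (1 - 2 * p)" using p by simp
  thus ?thesis by (simp add: algebra_simps)
qed

lemma cheb0:
  assumes n: "3 \<le> n" and p: "0 \<le> p" "p \<le> 1/2"
  shows "gnp_prob n p (\<lambda>E. Xk n 0 E < real n * (1 - p) ^ (n - 1) / 2) \<le> 4 / (real n * (1 - p) ^ (n - 1)) + 8 * p"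
proof -
  define q where "q = 1 - p"
  define Q where "Q = q ^ (n - 2)"
  have q: "q > 0" "q \<le> 1" using p by (auto simp: q_def)
  have Q: "Q > 0" using q by (simp add: Q_def)
  have n1: "n - 1 = Suc (n - 2)" using n by simp
  have qn1: "q ^ (n - 1) = q * Q" unfolding Q_def n1 by (simp only: power_Suc)
  hence qn1': "q ^ (n - Suc 0) = q * Q" by simp
  define \<mu> where "\<mu> = real n * q * Q"
  have mu: "\<mu> > 0" using n q Q by (simp add: \<mu>_def)
  have E1: "ExG (all_edges n) p (Xk n 0) = \<mu>"
    by (simp add: Ex_Xk betaG_def q_def[symmetric] qn1' \<mu>_def)
  have E2: "ExG (all_edges n) p (\<lambda>E. Xk n 0 E ^ 2) = \<mu> + real n * (real n - 1) * (q * Q ^ 2)"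
    by (simp add: Ex_Xk2 betaG_def q_def[symmetric] qn1' \<mu>_def PairG_def Q_def)
  have ch: "gnp_prob n p (\<lambda>E. Xk n 0 E < \<mu> / 2) \<le> 4 * ((\<mu> + real n * (real n - 1) * (q * Q ^ 2)) - \<mu> ^ 2) / \<mu> ^ 2"
    by (rule gnp_cheb[OF _ _ E1 mu E2]) (use p in auto)
  have a1: "real n * (real n - 1) * (q * Q ^ 2) \<le> real n * real n * (q * Q ^ 2)"
    using q Q by (intro mult_right_mono mult_left_mono) auto
  have a2: "real n * real n * (q * Q ^ 2) \<le> \<mu> ^ 2 * (1 + 2 * p)"
  proof -
    have "real n * real n * (q * Q ^ 2) * 1 \<le> real n * real n * (q * Q ^ 2) * (q * (1 + 2 * p))"
      using q_ineq[OF p] q Q by (intro mult_left_mono) (auto simp: q_def)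
    thus ?thesis by (simp add: \<mu>_def power2_eq_square algebra_simps)
  qed
  have "4 * ((\<mu> + real n * (real n - 1) * (q * Q ^ 2)) - \<mu> ^ 2) / \<mu> ^ 2 \<le> 4 * (\<mu> + \<mu> ^ 2 * (2 * p)) / \<mu> ^ 2"
  proof (rule divide_right_mono)
    have a3: "\<mu> ^ 2 * (1 + 2 * p) = \<mu> ^ 2 + \<mu> ^ 2 * (2 * p)" by (simp add: algebra_simps)
    show "4 * ((\<mu> + real n * (real n - 1) * (q * Q ^ 2)) - \<mu> ^ 2) \<le> 4 * (\<mu> + \<mu> ^ 2 * (2 * p))"
    proof -
      have "(\<mu> + real n * (real n - 1) * (q * Q ^ 2)) - \<mu> ^ 2 \<le> \<mu> + \<mu> ^ 2 * (2 * p)"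
        using a1 a2 a3 by linarith
      thus ?thesis by simp
    qed
  qed simp
  also have "\<dots> = 4 / \<mu> + 8 * p" using mu by (simp add: field_simps power2_eq_square)
  finally have "gnp_prob n p (\<lambda>E. Xk n 0 E < \<mu> / 2) \<le> 4 / \<mu> + 8 * p" using ch by linarith
  moreover have eq: "real n * (1 - p) ^ (n - 1) = \<mu>" unfolding \<mu>_def q_def[symmetric] qn1 by (simp add: mult.assoc)
  ultimately show ?thesis unfolding eq by simp
qed

lemma beta0: "betaG m p 0 = (1 - p) ^ m" by (simp add: betaG_def)
lemma beta1: "betaG m p 1 = real m * p * (1 - p) ^ (m - 1)" by (simp add: betaG_def)

lemma cheb1:
  assumes n: "3 \<le> n" and p: "0 < p" "p \<le> 1/2"
  shows "gnp_prob n p (\<lambda>E. Xk n 1 E < real n * (real n - 1) * p * (1 - p) ^ (n - 2) / 2)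
     \<le> 4 / (real n * (real n - 1) * p * (1 - p) ^ (n - 2)) + 8 * p + 4 / ((real n - 1) ^ 2 * p)"
proof -
  define q where "q = 1 - p"
  define R where "R = q ^ (n - 3)"
  define Q where "Q = q ^ (n - 2)"
  have q: "q > 0" "q \<le> 1" using p by (auto simp: q_def)
  have R: "R > 0" using q by (simp add: R_def)
  have n3: "n - 2 = Suc (n - 3)" using n by simp
  have QR: "Q = q * R" unfolding Q_def R_def n3 by (simp only: power_Suc)
  have Q: "Q > 0" using q R QR by simp
  have rn: "real (n - 1) = real n - 1" "real (n - 2) = real n - 2" using n by (auto simp: of_nat_diff)
  have e1: "n - 1 - 1 = n - 2" "n - 2 - 1 = n - 3" by auto
  define \<mu> where "\<mu> = real n * (real n - 1) * p * Q"
  have mu: "\<mu> > 0" using n p Q by (simp add: \<mu>_def)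
  have b1: "betaG (n - 1) p 1 = (real n - 1) * p * Q" unfolding beta1 e1 rn Q_def q_def ..
  have E1: "ExG (all_edges n) p (Xk n 1) = \<mu>"
    unfolding Ex_Xk b1 \<mu>_def by (simp add: mult.assoc)
  define P where "P = q * ((real n - 2) * p * R) ^ 2 + p * Q ^ 2"
  have P: "PairG n p 1 = P" unfolding PairG_def beta1 e1 rn P_def R_def Q_def q_def by (simp add: beta0)
  have E2: "ExG (all_edges n) p (\<lambda>E. Xk n 1 E ^ 2) = \<mu> + real n * (real n - 1) * P"
    unfolding Ex_Xk2 b1 P \<mu>_def by (simp add: mult.assoc)
  have ch: "gnp_prob n p (\<lambda>E. Xk n 1 E < \<mu> / 2) \<le> 4 * ((\<mu> + real n * (real n - 1) * P) - \<mu> ^ 2) / \<mu> ^ 2"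
    by (rule gnp_cheb[OF _ _ E1 mu E2]) (use p in auto)
  have nn: "real n \<ge> 3" using n by simp
  have b1: "real n * (real n - 1) * (q * ((real n - 2) * p * R) ^ 2) \<le> \<mu> ^ 2 * (1 + 2 * p)"
  proof -
    have i1: "(real n - 2) ^ 2 \<le> real n * (real n - 1)" using nn by (simp add: power2_eq_square algebra_simps)
    have i2: "q * 1 \<le> q * (q * (1 + 2 * p))"
      using q_ineq[of p] p q by (intro mult_left_mono) (auto simp: q_def)
    have "real n * (real n - 1) * (q * ((real n - 2) * p * R) ^ 2) = (real n * (real n - 1) * (real n - 2) ^ 2) * (p * R) ^ 2 * q"
      by (simp add: power2_eq_square algebra_simps)
    also have "\<dots> \<le> (real n * (real n - 1) * (real n * (real n - 1))) * (p * R) ^ 2 * q"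
      using i1 nn q by (intro mult_right_mono mult_left_mono) auto
    also have "\<dots> \<le> (real n * (real n - 1) * (real n * (real n - 1))) * (p * R) ^ 2 * (q * (q * (1 + 2 * p)))"
      using i2 nn by (intro mult_left_mono) auto
    also have "\<dots> = \<mu> ^ 2 * (1 + 2 * p)" by (simp add: \<mu>_def QR power2_eq_square algebra_simps)
    finally show ?thesis .
  qed
  have b2: "real n * (real n - 1) * (p * Q ^ 2) \<le> \<mu> ^ 2 / ((real n - 1) ^ 2 * p)"
  proof -
    have m2: "\<mu> ^ 2 = (real n * real n * (p * Q ^ 2)) * ((real n - 1) ^ 2 * p)"
      by (simp add: \<mu>_def power2_eq_square algebra_simps)
    have "(real n - 1) ^ 2 * p \<noteq> 0" using nn p by simp
    hence "\<mu> ^ 2 / ((real n - 1) ^ 2 * p) = real n * real n * (p * Q ^ 2)"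
      unfolding m2 by (rule nonzero_mult_div_cancel_right)
    moreover have "real n * (real n - 1) * (p * Q ^ 2) \<le> real n * real n * (p * Q ^ 2)"
      using nn p Q by (intro mult_right_mono mult_left_mono) auto
    ultimately show ?thesis by simp
  qed
  have a3: "\<mu> ^ 2 * (1 + 2 * p) = \<mu> ^ 2 + \<mu> ^ 2 * (2 * p)" by (simp add: algebra_simps)
  have a4: "real n * (real n - 1) * P = real n * (real n - 1) * (q * ((real n - 2) * p * R) ^ 2) + real n * (real n - 1) * (p * Q ^ 2)"
    unfolding P_def by (simp add: algebra_simps)
  have "(\<mu> + real n * (real n - 1) * P) - \<mu> ^ 2 \<le> \<mu> + \<mu> ^ 2 * (2 * p) + \<mu> ^ 2 / ((real n - 1) ^ 2 * p)"
    using b1 b2 a3 a4 by linarith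
  hence "4 * ((\<mu> + real n * (real n - 1) * P) - \<mu> ^ 2) / \<mu> ^ 2 \<le> 4 * (\<mu> + \<mu> ^ 2 * (2 * p) + \<mu> ^ 2 / ((real n - 1) ^ 2 * p)) / \<mu> ^ 2"
    by (intro divide_right_mono) auto
  also have "\<dots> = 4 / \<mu> + 8 * p + 4 / ((real n - 1) ^ 2 * p)" using mu nn p by (simp add: field_simps power2_eq_square)
  finally have "gnp_prob n p (\<lambda>E. Xk n 1 E < \<mu> / 2) \<le> 4 / \<mu> + 8 * p + 4 / ((real n - 1) ^ 2 * p)" using ch by linarith
  moreover have eq: "real n * (real n - 1) * p * (1 - p) ^ (n - 2) = \<mu>" unfolding \<mu>_def Q_def q_def ..
  ultimately show ?thesis unfolding eq by simp
qed

lemma markovK: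
  assumes n: "3 \<le> n" and p: "0 < p" "p \<le> 1/2"
  shows "gnp_prob n p (\<lambda>E. real n * (real n - 1) * p * (1 - p) ^ (n - 2) / 4 \<le> Kc n E) \<le> 4 * (1 - p) ^ (n - 2)"
proof -
  define \<mu> where "\<mu> = real n * (real n - 1) * p * (1 - p) ^ (n - 2)"
  have mu: "\<mu> > 0" using n p by (simp add: \<mu>_def)
  have K0: "0 \<le> Kc n E" for E unfolding Kc_def isoI_def by (intro sum_nonneg) auto
  have "gnp_prob n p (\<lambda>E. \<mu> / 4 \<le> Kc n E) \<le> ExG (all_edges n) p (Kc n) / (\<mu> / 4)"
    by (rule gnp_markov) (use p mu K0 in auto)
  also have "\<dots> = 4 * (1 - p) ^ (n - 2)"
  proof -
    have "ExG (all_edges n) p (Kc n) = \<mu> * (1 - p) ^ (n - 2)"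
      unfolding Ex_Kc \<mu>_def by (simp add: power2_eq_square algebra_simps)
    thus ?thesis using mu by simp
  qed
  finally show ?thesis by (simp add: \<mu>_def)
qed




lemma qpow_lower:
  assumes "0 \<le> p" "p \<le> 1/2"
  shows "exp (- (real j * (p + 2 * p ^ 2))) \<le> (1 - p) ^ j"
proof -
  have q: "0 < 1 - p" using assms by simp
  have "(1 - p) ^ j = exp (real j * ln (1 - p))"
    using q by (simp add: exp_of_nat_mult)
  moreover have "- (real j * (p + 2 * p ^ 2)) \<le> real j * ln (1 - p)"
  proof -
    have "real j * (- p - 2 * p\<^sup>2) \<le> real j * ln (1 - p)"
      using ln_one_minus_pos_lower_bound[OF assms] by (intro mult_left_mono) auto
    thus ?thesis by (simp add: algebra_simps)
  qed
  ultimately show ?thesis by simp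
qed

lemma qpow_upper:
  assumes "0 \<le> p" "p \<le> 1"
  shows "(1 - p) ^ j \<le> exp (- (real j * p))"
proof -
  have "1 - p \<le> exp (- p)" using exp_ge_add_one_self[of "-p"] by simp
  hence "(1 - p) ^ j \<le> exp (- p) ^ j" using assms by (intro power_mono) auto
  also have "\<dots> = exp (- (real j * p))" by (simp add: exp_of_nat_mult[symmetric])
  finally show ?thesis .
qed

lemma ln_ge1: "3 \<le> n \<Longrightarrow> 1 \<le> ln (real n)"
proof -
  assume "3 \<le> n"
  hence "exp 1 \<le> real n" using exp_le by linarith
  hence "ln (exp 1) \<le> ln (real n)" using \<open>3 \<le> n\<close> by (subst ln_le_cancel_iff) auto
  thus ?thesis by simp
qed

lemma exp_lnln: "3 \<le> n \<Longrightarrow> exp (- (ln (real n) + ln (ln (real n)) - w)) = exp w / (real n * ln (real n))"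
proof -
  assume n: "3 \<le> n"
  have l: "0 < ln (real n)" using ln_ge1[OF n] by simp
  have "exp (- (ln (real n) + ln (ln (real n)) - w)) = exp w / (exp (ln (real n)) * exp (ln (ln (real n))))"
    by (simp add: exp_diff exp_add exp_minus field_simps)
  also have "\<dots> = exp w / (real n * ln (real n))" using n l by simp
  finally show ?thesis .
qed

lemma mu1_lower:
  assumes n: "3 \<le> n" and p: "0 \<le> p" "p \<le> 1/4" and pp: "4 * p * (p * real n) \<le> 1"
  shows "(real n - 1) * (p * real n) * exp (- (p * real n)) / 2 \<le> real n * (real n - 1) * p * (1 - p) ^ (n - 2)"
proof -
  let ?x = "p * real n"
  have "real (n - 2) * (p + 2 * p ^ 2) \<le> real n * (p + 2 * p ^ 2)"
    using p by (intro mult_right_mono) auto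
  also have "\<dots> = ?x + 2 * p * ?x" by (simp add: power2_eq_square algebra_simps)
  finally have a: "real (n - 2) * (p + 2 * p ^ 2) \<le> ?x + 2 * p * ?x" .
  have "exp (- (?x + 2 * p * ?x)) \<le> exp (- (real (n - 2) * (p + 2 * p ^ 2)))"
    using a by simp
  also have "\<dots> \<le> (1 - p) ^ (n - 2)" by (rule qpow_lower) (use p in auto)
  finally have b: "exp (- ?x) * exp (- (2 * p * ?x)) \<le> (1 - p) ^ (n - 2)"
    by (simp add: exp_add[symmetric])
  have c: "1 / 2 \<le> exp (- (2 * p * ?x))"
  proof -
    have "1 - 2 * p * ?x \<le> exp (- (2 * p * ?x))" using exp_ge_add_one_self[of "- (2 * p * ?x)"] by simp
    moreover have "1 / 2 \<le> 1 - 2 * p * ?x" using pp by simp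
    ultimately show ?thesis by linarith
  qed
  have "exp (- ?x) / 2 \<le> exp (- ?x) * exp (- (2 * p * ?x))"
    using c by (simp add: mult_left_mono[of "1/2" _ "exp (- ?x)", simplified])
  hence d: "exp (- ?x) / 2 \<le> (1 - p) ^ (n - 2)" using b by linarith
  have e: "0 \<le> (real n - 1) * ?x" using n p by simp
  have "(real n - 1) * ?x * (exp (- ?x) / 2) \<le> (real n - 1) * ?x * (1 - p) ^ (n - 2)"
    by (rule mult_left_mono[OF d e])
  moreover have "(real n - 1) * ?x * (exp (- ?x) / 2) = (real n - 1) * (p * real n) * exp (- (p * real n)) / 2" by simp
  moreover have "(real n - 1) * ?x * (1 - p) ^ (n - 2) = real n * (real n - 1) * p * (1 - p) ^ (n - 2)" by (simp add: algebra_simps)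
  ultimately show ?thesis by linarith
qed




lemma gnp_False: "gnp_prob n p (\<lambda>_. False) = 0"
  by (simp add: gnp_Ex ExG_def)

lemma exp_half_le2: "exp (1/2 :: real) \<le> 2"
proof -
  have "exp (1/2 :: real) ^ 2 = exp 1" by (simp add: exp_of_nat_mult[symmetric])
  also have "\<dots> \<le> 2 ^ 2" using exp_le by simp
  finally show ?thesis by (rule power2_le_imp_le) simp
qed

lemma npowr: "3 \<le> n \<Longrightarrow> exp (- (a * ln (real n))) = 1 / real n powr a"
  by (simp add: powr_def exp_minus field_simps)

lemma nonadj_n:
  assumes n: "3 \<le> n" and p: "0 \<le> p" "p \<le> 1/4" and pp: "4 * p * (p * real n) \<le> 1"
    and x: "p * real n \<le> ln (real n) + ln (ln (real n)) - w"
    and L: "\<Lambda> \<le> real n powr (5/8)" "\<Lambda> \<le> exp w / 16" "4 * C \<le> \<Lambda>" "0 < C"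
  shows "1 - (4 / \<Lambda> + 8 * p + 64 / real n + 8 / real n powr (1/4))
     \<le> gnp_prob n p (\<lambda>E. C \<le> real (card (nonadj_dom_pairs n E)))"
proof -
  have Lp: "\<Lambda> > 0" using L by linarith
  have nr: "real n \<ge> 3" using n by simp
  have l1: "1 \<le> ln (real n)" by (rule ln_ge1[OF n])
  have p2: "0 \<le> p" "p \<le> 1/2" using p by auto
  have t0: "0 \<le> 64 / real n + 8 / real n powr (1/4)" by simp
  show ?thesis
  proof (cases "p * real n \<le> ln (real n) / 4")
    case True
    define \<mu> where "\<mu> = real n * (1 - p) ^ (n - 1)"
    have "real (n - 1) * (p + 2 * p ^ 2) \<le> real n * (p + 2 * p ^ 2)"
      using p by (intro mult_right_mono) auto
    also have "\<dots> = (p * real n) * (1 + 2 * p)" by (simp add: power2_eq_square algebra_simps)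
    also have "\<dots> \<le> (ln (real n) / 4) * (3 / 2)"
      using True p l1 by (intro mult_mono) auto
    finally have a: "real (n - 1) * (p + 2 * p ^ 2) \<le> (3/8) * ln (real n)" by simp
    have "exp (- ((3/8) * ln (real n))) \<le> exp (- (real (n - 1) * (p + 2 * p ^ 2)))" using a by simp
    also have "\<dots> \<le> (1 - p) ^ (n - 1)" by (rule qpow_lower[OF p2])
    finally have b0: "exp (- ((3/8) * ln (real n))) \<le> (1 - p) ^ (n - 1)" .
    have b: "1 / real n powr (3/8) \<le> (1 - p) ^ (n - 1)" using b0 unfolding npowr[OF n] .
    have "real n powr (5/8) = real n * (1 / real n powr (3/8))"
    proof -
      have "real n powr (5/8) * real n powr (3/8) = real n" using nr by (simp add: powr_add[symmetric])
      thus ?thesis using nr by (simp add: field_simps)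
    qed
    also have "\<dots> \<le> \<mu>" unfolding \<mu>_def using b nr by (intro mult_left_mono) auto
    finally have mu: "\<Lambda> \<le> \<mu>" using L by linarith
    have c0: "gnp_prob n p (\<lambda>E. Xk n 0 E < \<mu> / 2) \<le> 4 / \<mu> + 8 * p"
      unfolding \<mu>_def by (rule cheb0[OF n p2])
    have "4 / \<mu> \<le> 4 / \<Lambda>" using mu Lp by (intro divide_left_mono) auto
    hence c: "gnp_prob n p (\<lambda>E. Xk n 0 E < \<mu> / 2) \<le> 4 / \<Lambda> + 8 * p" using c0 by linarith
    have "1 - gnp_prob n p (\<lambda>E. Xk n 0 E < \<mu> / 2) - gnp_prob n p (\<lambda>_. False)
        \<le> gnp_prob n p (\<lambda>E. C \<le> real (card (nonadj_dom_pairs n E)))"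
    proof (rule gnp_union)
      fix E
      have "Xk n 0 E \<le> real (card (nonadj_dom_pairs n E))" using C2 n by simp
      thus "C \<le> real (card (nonadj_dom_pairs n E)) \<or> Xk n 0 E < \<mu> / 2 \<or> False"
        using mu L by linarith
    qed (use p in auto)
    thus ?thesis using c t0 unfolding gnp_False by linarith
  next
    case False
    hence xl: "ln (real n) / 4 < p * real n" by simp
    have pos: "0 < p" using xl l1 nr p by (cases "p = 0") auto
    define \<mu> where "\<mu> = real n * (real n - 1) * p * (1 - p) ^ (n - 2)"
    have m1: "(real n - 1) * (p * real n) * exp (- (p * real n)) / 2 \<le> \<mu>"
      unfolding \<mu>_def by (rule mu1_lower[OF n p pp])
    have ex: "exp w / (real n * ln (real n)) \<le> exp (- (p * real n))"
      using x exp_lnln[OF n, of w] by (metis exp_le_cancel_iff neg_le_iff_le)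
    have "(ln (real n) / 4) * (exp w / (real n * ln (real n))) \<le> (p * real n) * exp (- (p * real n))"
      using xl ex l1 by (intro mult_mono) auto
    also have "(ln (real n) / 4) * (exp w / (real n * ln (real n))) = exp w / (4 * real n)"
      using l1 by (simp add: field_simps)
    finally have xe: "exp w / (4 * real n) \<le> (p * real n) * exp (- (p * real n))" .
    have "exp w / 16 \<le> (real n - 1) * (exp w / (4 * real n)) / 2"
    proof -
      have "exp w * (real n / 2) \<le> exp w * (real n - 1)" using nr by (intro mult_left_mono) auto
      thus ?thesis using nr by (simp add: field_simps)
    qed
    also have "\<dots> \<le> (real n - 1) * ((p * real n) * exp (- (p * real n))) / 2"
      using xe nr by (intro divide_right_mono mult_left_mono) auto
    also have "\<dots> \<le> \<mu>" using m1 by (simp add: mult.assoc)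
    finally have mu: "\<Lambda> \<le> \<mu>" using L by linarith
    have p2': "0 < p" "p \<le> 1/2" using pos p by auto
    have c1: "gnp_prob n p (\<lambda>E. Xk n 1 E < \<mu> / 2) \<le> 4 / \<mu> + 8 * p + 4 / ((real n - 1) ^ 2 * p)"
      unfolding \<mu>_def by (rule cheb1[OF n p2'])
    have "4 / \<mu> \<le> 4 / \<Lambda>" using mu Lp by (intro divide_left_mono) auto
    moreover have "4 / ((real n - 1) ^ 2 * p) \<le> 64 / real n"
    proof -
      have pn: "1 / (4 * real n) \<le> p" using xl l1 nr by (simp add: field_simps)
      have h: "0 \<le> (3 * real n - 2) * (real n - 2)" using nr by (intro mult_nonneg_nonneg) auto
      have h2: "real n * 8 \<le> 4 + real n * (real n * 3)" using h by (simp add: algebra_simps)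
      have sq: "real n ^ 2 / 4 \<le> (real n - 1) ^ 2" using h2 by (simp add: power2_eq_square field_simps)
      have "(real n ^ 2 / 4) * (1 / (4 * real n)) \<le> (real n - 1) ^ 2 * p"
        using pn sq nr by (intro mult_mono) auto
      moreover have "(real n ^ 2 / 4) * (1 / (4 * real n)) = real n / 16" using nr by (simp add: power2_eq_square field_simps)
      ultimately have "real n / 16 \<le> (real n - 1) ^ 2 * p" by simp
      hence "4 / ((real n - 1) ^ 2 * p) \<le> 4 / (real n / 16)" using nr by (intro divide_left_mono) auto
      thus ?thesis by simp
    qed
    ultimately have c: "gnp_prob n p (\<lambda>E. Xk n 1 E < \<mu> / 2) \<le> 4 / \<Lambda> + 8 * p + 64 / real n" using c1 by linarith
    have k0: "gnp_prob n p (\<lambda>E. \<mu> / 4 \<le> Kc n E) \<le> 4 * (1 - p) ^ (n - 2)"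
      unfolding \<mu>_def by (rule markovK[OF n p2'])
    have "(1 - p) ^ (n - 2) \<le> exp (- (real (n - 2) * p))" by (rule qpow_upper) (use p in auto)
    also have "\<dots> = exp (- (p * real n)) * exp (2 * p)" using n by (simp add: of_nat_diff exp_add[symmetric] algebra_simps)
    also have "\<dots> \<le> exp (- ((1/4) * ln (real n))) * 2"
    proof (rule mult_mono)
      show "exp (- (p * real n)) \<le> exp (- ((1/4) * ln (real n)))" using xl by simp
      have "exp (2 * p) \<le> exp (1/2)" using p by simp
      thus "exp (2 * p) \<le> 2" using exp_half_le2 by linarith
    qed auto
    also have "\<dots> = 2 / real n powr (1/4)" unfolding npowr[OF n] by simp
    finally have k: "gnp_prob n p (\<lambda>E. \<mu> / 4 \<le> Kc n E) \<le> 8 / real n powr (1/4)" using k0 by simp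
    have "1 - gnp_prob n p (\<lambda>E. Xk n 1 E < \<mu> / 2) - gnp_prob n p (\<lambda>E. \<mu> / 4 \<le> Kc n E)
        \<le> gnp_prob n p (\<lambda>E. C \<le> real (card (nonadj_dom_pairs n E)))"
    proof (rule gnp_union)
      fix E
      have "Xk n 1 E \<le> real (card (nonadj_dom_pairs n E)) + Kc n E" by (rule C3)
      thus "C \<le> real (card (nonadj_dom_pairs n E)) \<or> Xk n 1 E < \<mu> / 2 \<or> \<mu> / 4 \<le> Kc n E"
        using mu L by linarith
    qed (use p in auto)
    thus ?thesis using c k by linarith
  qed
qed

lemma adj_n:
  assumes n: "3 \<le> n" and p: "0 < p" "p \<le> 1/4" and pp: "4 * p * (p * real n) \<le> 1"
    and x: "p * real n \<le> ln (real n) + ln (ln (real n)) - w"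
    and L: "\<Lambda> \<le> p * real n ^ 2 / 12" "\<Lambda> \<le> sqrt (real n) / 4" "\<Lambda> \<le> exp w / 8" "2 * C \<le> \<Lambda>" "0 < C"
  shows "1 - (4 / \<Lambda> + 8 * p + 16 / (p * real n ^ 2))
     \<le> gnp_prob n p (\<lambda>E. C \<le> real (card (adj_dom_pairs n E)))"
proof -
  have Lp: "\<Lambda> > 0" using L by linarith
  have nr: "real n \<ge> 3" using n by simp
  have l1: "1 \<le> ln (real n)" by (rule ln_ge1[OF n])
  have p0: "0 \<le> p" using p by simp
  have p2: "0 < p" "p \<le> 1/2" using p by auto
  define \<mu> where "\<mu> = real n * (real n - 1) * p * (1 - p) ^ (n - 2)"
  let ?x = "p * real n"
  have m1: "(real n - 1) * ?x * exp (- ?x) / 2 \<le> \<mu>"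
    unfolding \<mu>_def by (rule mu1_lower[OF n p0 p(2) pp])
  have n2: "real n / 2 \<le> real n - 1" using nr by simp
  have xpos: "0 \<le> ?x" using p nr by simp
  have mu: "\<Lambda> \<le> \<mu>"
  proof (cases "?x \<le> 1")
    case True
    have "exp (-1) \<le> exp (- ?x)" using True by simp
    moreover have "1 / 3 \<le> exp (-1::real)" using exp_le by (simp add: exp_minus field_simps)
    ultimately have e: "1 / 3 \<le> exp (- ?x)" by linarith
    have "p * real n ^ 2 / 12 = (real n / 2) * ?x * (1/3) / 2" by (simp add: power2_eq_square)
    also have "\<dots> \<le> (real n - 1) * ?x * exp (- ?x) / 2"
      using n2 e xpos nr p0 by (intro divide_right_mono mult_mono) auto
    finally show ?thesis using m1 L by linarith
  next
    case False
    show ?thesis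
    proof (cases "?x \<le> ln (real n) / 2")
      case True
      have "exp (- ((1/2) * ln (real n))) \<le> exp (- ?x)" using True by simp
      hence e: "1 / sqrt (real n) \<le> exp (- ?x)" unfolding npowr[OF n] using nr by (simp add: powr_half_sqrt)
      have sq: "sqrt (real n) / 4 = (real n / 2) * (1 / sqrt (real n)) / 2"
        using nr by (simp add: field_simps real_div_sqrt)
      also have "\<dots> \<le> (real n - 1) * (?x * exp (- ?x)) / 2"
      proof (intro divide_right_mono mult_mono)
        show "1 / sqrt (real n) \<le> ?x * exp (- ?x)"
        proof -
          have "1 * exp (- ?x) \<le> ?x * exp (- ?x)" using False by (intro mult_right_mono) auto
          thus ?thesis using e by linarith
        qed
      qed (use n2 nr in auto)
      finally show ?thesis using m1 L by (simp add: mult.assoc)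
    next
      case False
      hence xl: "ln (real n) / 2 < ?x" by simp
      have ex: "exp w / (real n * ln (real n)) \<le> exp (- ?x)"
        using x exp_lnln[OF n, of w] by (metis exp_le_cancel_iff neg_le_iff_le)
      have "(ln (real n) / 2) * (exp w / (real n * ln (real n))) \<le> ?x * exp (- ?x)"
        using xl ex l1 by (intro mult_mono) auto
      also have "(ln (real n) / 2) * (exp w / (real n * ln (real n))) = exp w / (2 * real n)"
        using l1 by (simp add: field_simps)
      finally have xe: "exp w / (2 * real n) \<le> ?x * exp (- ?x)" .
      have "exp w / 8 \<le> (real n - 1) * (exp w / (2 * real n)) / 2"
      proof -
        have "exp w * (real n / 2) \<le> exp w * (real n - 1)" using n2 by (intro mult_left_mono) auto
        thus ?thesis using nr by (simp add: field_simps)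
      qed
      also have "\<dots> \<le> (real n - 1) * (?x * exp (- ?x)) / 2"
        using xe nr by (intro divide_right_mono mult_left_mono) auto
      finally show ?thesis using m1 L by (simp add: mult.assoc)
    qed
  qed
  have c1: "gnp_prob n p (\<lambda>E. Xk n 1 E < \<mu> / 2) \<le> 4 / \<mu> + 8 * p + 4 / ((real n - 1) ^ 2 * p)"
    unfolding \<mu>_def by (rule cheb1[OF n p2])
  have "4 / \<mu> \<le> 4 / \<Lambda>" using mu Lp by (intro divide_left_mono) auto
  moreover have "4 / ((real n - 1) ^ 2 * p) \<le> 16 / (p * real n ^ 2)"
  proof -
    have h: "0 \<le> (3 * real n - 2) * (real n - 2)" using nr by (intro mult_nonneg_nonneg) auto
    have h2: "real n * 8 \<le> 4 + real n * (real n * 3)" using h by (simp add: algebra_simps)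
    have sq: "real n ^ 2 / 4 \<le> (real n - 1) ^ 2" using h2 by (simp add: power2_eq_square field_simps)
    have "(real n ^ 2 / 4) * p \<le> (real n - 1) ^ 2 * p" using sq p by (intro mult_right_mono) auto
    hence "4 / ((real n - 1) ^ 2 * p) \<le> 4 / ((real n ^ 2 / 4) * p)" using nr p by (intro divide_left_mono) auto
    thus ?thesis by (simp add: field_simps)
  qed
  ultimately have c: "gnp_prob n p (\<lambda>E. Xk n 1 E < \<mu> / 2) \<le> 4 / \<Lambda> + 8 * p + 16 / (p * real n ^ 2)"
    using c1 by linarith
  have "1 - gnp_prob n p (\<lambda>E. Xk n 1 E < \<mu> / 2) - gnp_prob n p (\<lambda>_. False)
      \<le> gnp_prob n p (\<lambda>E. C \<le> real (card (adj_dom_pairs n E)))"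
  proof (rule gnp_union)
    fix E
    have "Xk n 1 E \<le> real (card (adj_dom_pairs n E))" by (rule C1)
    thus "C \<le> real (card (adj_dom_pairs n E)) \<or> Xk n 1 E < \<mu> / 2 \<or> False"
      using mu L by linarith
  qed (use p in auto)
  thus ?thesis using c unfolding gnp_False by linarith
qed




lemma lim1: "(\<lambda>n::nat. ln (real n) / real n) \<longlonglongrightarrow> 0" by real_asymp
lemma lim2: "(\<lambda>n::nat. ln (real n) ^ 2 / real n) \<longlonglongrightarrow> 0" by real_asymp
lemma lim3: "(\<lambda>n::nat. 64 / real n + 8 / real n powr (1/4)) \<longlonglongrightarrow> 0" by real_asymp
lemma lim4: "filterlim (\<lambda>n::nat. real n powr (5/8)) at_top sequentially" by real_asymp
lemma lim5: "filterlim (\<lambda>n::nat. sqrt (real n) / 4) at_top sequentially" by real_asymp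

lemma tendsto_one_I:
  assumes "\<And>n. g n \<le> (1::real)" "\<And>e. e > 0 \<Longrightarrow> eventually (\<lambda>n. 1 - e < g n) sequentially"
  shows "g \<longlonglongrightarrow> 1"
proof (rule tendstoI)
  fix e :: real assume e: "e > 0"
  show "eventually (\<lambda>n. dist (g n) 1 < e) sequentially"
    using assms(2)[OF e] by eventually_elim (use assms(1) in \<open>auto simp: dist_real_def\<close>)
qed

lemma ev_small: "(f \<longlonglongrightarrow> 0) \<Longrightarrow> (e::real) > 0 \<Longrightarrow> eventually (\<lambda>n. f n < e) sequentially"
  by (rule order_tendstoD(2)) auto

lemma ev_big: "filterlim f at_top sequentially \<Longrightarrow> eventually (\<lambda>n. (K::real) \<le> f n) sequentially"
  by (simp add: filterlim_at_top)

lemma basic: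
  assumes p01: "\<And>n. 0 \<le> p n \<and> p n \<le> 1" and om: "filterlim \<omega> at_top sequentially"
    and ev: "eventually (\<lambda>n. p n < (ln (real n) + ln (ln (real n)) - \<omega> n) / real n) sequentially"
  shows "eventually (\<lambda>n. 3 \<le> n \<and> p n * real n \<le> ln (real n) + ln (ln (real n)) - \<omega> n
     \<and> p n \<le> 2 * (ln (real n) / real n) \<and> 4 * p n * (p n * real n) \<le> 1 \<and> p n \<le> 1/4) sequentially"
proof -
  have e1: "eventually (\<lambda>n. 3 \<le> n) sequentially" by (rule eventually_ge_at_top)
  have e2: "eventually (\<lambda>n. 0 \<le> \<omega> n) sequentially" using ev_big[OF om] .
  have e3: "eventually (\<lambda>n. ln (real n) / real n < 1/8) sequentially" by (rule ev_small[OF lim1]) simp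
  have e4: "eventually (\<lambda>n. ln (real n) ^ 2 / real n < 1/16) sequentially" by (rule ev_small[OF lim2]) simp
  show ?thesis using e1 e2 e3 e4 ev
  proof eventually_elim
    case (elim n)
    have nr: "real n \<ge> 3" using elim by simp
    have l1: "1 \<le> ln (real n)" using ln_ge1 elim by simp
    have x: "p n * real n \<le> ln (real n) + ln (ln (real n)) - \<omega> n"
      using elim(5) nr by (simp add: field_simps)
    have "ln (ln (real n)) \<le> ln (real n) - 1" using l1 by (intro ln_le_minus_one) simp
    hence x2: "p n * real n \<le> 2 * ln (real n)" using x elim(2) by linarith
    hence p1: "p n \<le> 2 * (ln (real n) / real n)" using nr by (simp add: field_simps)
    hence p4: "p n \<le> 1/4" using elim(3) by linarith
    have "4 * p n * (p n * real n) \<le> 4 * (2 * (ln (real n) / real n)) * (2 * ln (real n))"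
    proof (rule mult_mono)
      show "4 * p n \<le> 4 * (2 * (ln (real n) / real n))" using p1 by simp
      show "0 \<le> 4 * (2 * (ln (real n) / real n))" using l1 nr by simp
      show "0 \<le> p n * real n" using p01[of n] by simp
    qed (rule x2)
    also have "\<dots> = 16 * (ln (real n) ^ 2 / real n)" by (simp add: power2_eq_square)
    also have "\<dots> \<le> 1" using elim(4) by linarith
    finally show ?case using elim(1) x p1 p4 by simp
  qed
qed

lemma part1_nonadj:
  assumes C: "C > 0" and p01: "\<And>n. 0 \<le> p n \<and> p n \<le> 1" and om: "filterlim \<omega> at_top sequentially"
    and ev: "eventually (\<lambda>n. p n < (ln (real n) + ln (ln (real n)) - \<omega> n) / real n) sequentially"
  shows "aas p (\<lambda>n E. real (card (nonadj_dom_pairs n E)) \<ge> C)"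
  unfolding aas_def
proof (rule tendsto_one_I)
  fix n show "gnp_prob n (p n) (\<lambda>E. C \<le> real (card (nonadj_dom_pairs n E))) \<le> 1"
    using p01[of n] by (intro gnp_le1) auto
next
  fix e :: real assume e: "e > 0"
  define K where "K = max (4 * C) (16 / e)"
  have K: "K > 0" "4 * C \<le> K" "16 / e \<le> K" using C unfolding K_def by auto
  have f1: "eventually (\<lambda>n. K \<le> real n powr (5/8)) sequentially" by (rule ev_big[OF lim4])
  have f2: "eventually (\<lambda>n. ln (16 * K) \<le> \<omega> n) sequentially" by (rule ev_big[OF om])
  have f3: "eventually (\<lambda>n. ln (real n) / real n < e / 64) sequentially" by (rule ev_small[OF lim1]) (use e in simp)
  have f4: "eventually (\<lambda>n. 64 / real n + 8 / real n powr (1/4) < e / 4) sequentially" by (rule ev_small[OF lim3]) (use e in simp)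
  show "eventually (\<lambda>n. 1 - e < gnp_prob n (p n) (\<lambda>E. C \<le> real (card (nonadj_dom_pairs n E)))) sequentially"
    using basic[OF p01 om ev] f1 f2 f3 f4
  proof eventually_elim
    case (elim n)
    define \<Lambda> where "\<Lambda> = min (real n powr (5/8)) (exp (\<omega> n) / 16)"
    have "16 * K \<le> exp (\<omega> n)"
    proof -
      have "exp (ln (16 * K)) \<le> exp (\<omega> n)" using elim(3) by simp
      thus ?thesis using K by simp
    qed
    hence LK: "K \<le> \<Lambda>" unfolding \<Lambda>_def using elim(2) by simp
    have n3: "3 \<le> n" and p: "0 \<le> p n" "p n \<le> 1/4" using elim(1) p01[of n] by auto
    have main: "1 - (4 / \<Lambda> + 8 * p n + 64 / real n + 8 / real n powr (1/4))
       \<le> gnp_prob n (p n) (\<lambda>E. C \<le> real (card (nonadj_dom_pairs n E)))"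
    proof (rule nonadj_n[OF n3 p])
      show "4 * p n * (p n * real n) \<le> 1" using elim(1) by simp
      show "p n * real n \<le> ln (real n) + ln (ln (real n)) - \<omega> n" using elim(1) by simp
      show "\<Lambda> \<le> real n powr (5/8)" "\<Lambda> \<le> exp (\<omega> n) / 16" unfolding \<Lambda>_def by auto
      show "4 * C \<le> \<Lambda>" using LK K by linarith
    qed (rule C)
    have a1: "4 / \<Lambda> \<le> e / 4"
    proof -
      have "4 / \<Lambda> \<le> 4 / K" using LK K by (intro divide_left_mono) auto
      also have "\<dots> \<le> 4 / (16 / e)" using K e by (intro divide_left_mono) auto
      also have "\<dots> = e / 4" by simp
      finally show ?thesis .
    qed
    have a2: "8 * p n < e / 4" using elim(1,4) by linarith
    have "4 / \<Lambda> + 8 * p n + 64 / real n + 8 / real n powr (1/4) < 3 * e / 4"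
      using a1 a2 elim(5) by linarith
    thus ?case using main e by linarith
  qed
qed

lemma part1_adj:
  assumes C: "C > 0" and p01: "\<And>n. 0 \<le> p n \<and> p n \<le> 1" and om: "filterlim \<omega> at_top sequentially"
    and ev: "eventually (\<lambda>n. p n < (ln (real n) + ln (ln (real n)) - \<omega> n) / real n) sequentially"
    and pn2: "filterlim (\<lambda>n. p n * (real n)^2) at_top sequentially"
  shows "aas p (\<lambda>n E. real (card (adj_dom_pairs n E)) \<ge> C)"
  unfolding aas_def
proof (rule tendsto_one_I)
  fix n show "gnp_prob n (p n) (\<lambda>E. C \<le> real (card (adj_dom_pairs n E))) \<le> 1"
    using p01[of n] by (intro gnp_le1) auto
next
  fix e :: real assume e: "e > 0"
  define K where "K = max (2 * C) (16 / e)"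
  have K: "K > 0" "2 * C \<le> K" "16 / e \<le> K" using C unfolding K_def by auto
  have f1: "eventually (\<lambda>n. max (12 * K) (64 / e) \<le> p n * (real n)^2) sequentially" by (rule ev_big[OF pn2])
  have f2: "eventually (\<lambda>n. ln (8 * K) \<le> \<omega> n) sequentially" by (rule ev_big[OF om])
  have f3: "eventually (\<lambda>n. ln (real n) / real n < e / 64) sequentially" by (rule ev_small[OF lim1]) (use e in simp)
  have f4: "eventually (\<lambda>n. K \<le> sqrt (real n) / 4) sequentially" by (rule ev_big[OF lim5])
  show "eventually (\<lambda>n. 1 - e < gnp_prob n (p n) (\<lambda>E. C \<le> real (card (adj_dom_pairs n E)))) sequentially"
    using basic[OF p01 om ev] f1 f2 f3 f4
  proof eventually_elim
    case (elim n)
    define \<Lambda> where "\<Lambda> = min (min (p n * real n ^ 2 / 12) (sqrt (real n) / 4)) (exp (\<omega> n) / 8)"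
    have "8 * K \<le> exp (\<omega> n)"
    proof -
      have "exp (ln (8 * K)) \<le> exp (\<omega> n)" using elim(3) by simp
      thus ?thesis using K by simp
    qed
    moreover have "K \<le> p n * real n ^ 2 / 12" using elim(2) by simp
    ultimately have LK: "K \<le> \<Lambda>" unfolding \<Lambda>_def using elim(5) by simp
    have n3: "3 \<le> n" using elim(1) by simp
    have nr: "real n \<ge> 3" using n3 by simp
    have pp: "0 < p n * real n ^ 2" using elim(2) K by linarith
    hence ppos: "0 < p n" using nr by (simp add: zero_less_mult_iff)
    have p: "0 < p n" "p n \<le> 1/4" using elim(1) ppos by auto
    have main: "1 - (4 / \<Lambda> + 8 * p n + 16 / (p n * real n ^ 2))
       \<le> gnp_prob n (p n) (\<lambda>E. C \<le> real (card (adj_dom_pairs n E)))"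
    proof (rule adj_n[OF n3 p])
      show "4 * p n * (p n * real n) \<le> 1" using elim(1) by simp
      show "p n * real n \<le> ln (real n) + ln (ln (real n)) - \<omega> n" using elim(1) by simp
      show "\<Lambda> \<le> p n * real n ^ 2 / 12" "\<Lambda> \<le> sqrt (real n) / 4" "\<Lambda> \<le> exp (\<omega> n) / 8"
        unfolding \<Lambda>_def by auto
      show "2 * C \<le> \<Lambda>" using LK K by linarith
    qed (rule C)
    have a1: "4 / \<Lambda> \<le> e / 4"
    proof -
      have "4 / \<Lambda> \<le> 4 / K" using LK K by (intro divide_left_mono) auto
      also have "\<dots> \<le> 4 / (16 / e)" using K e by (intro divide_left_mono) auto
      also have "\<dots> = e / 4" by simp
      finally show ?thesis .
    qed
    have a2: "8 * p n < e / 4" using elim(1,4) by linarith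
    have a3: "16 / (p n * real n ^ 2) \<le> e / 4"
    proof -
      have "64 / e \<le> p n * real n ^ 2" using elim(2) by simp
      moreover have "0 < (p n * real n ^ 2) * (64 / e)" by (rule mult_pos_pos[OF pp]) (use e in simp)
      ultimately have "16 / (p n * real n ^ 2) \<le> 16 / (64 / e)" by (intro divide_left_mono) auto
      thus ?thesis by simp
    qed
    show ?case using main a1 a2 a3 e by linarith
  qed
qed




lemma aas_dual1:
  assumes "aas p (\<lambda>n E. real (card (nonadj_dom_pairs n E)) \<ge> C)"
  shows "aas (\<lambda>n. 1 - p n) (\<lambda>n E. real (card (adj_dom_pairs n E)) \<ge> C)"
proof -
  have "gnp_prob n (1 - p n) (\<lambda>E. C \<le> real (card (adj_dom_pairs n E))) =
        gnp_prob n (p n) (\<lambda>E. C \<le> real (card (nonadj_dom_pairs n E)))" for n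
  proof -
    have "gnp_prob n (p n) (\<lambda>E. C \<le> real (card (adj_dom_pairs n (compG n E)))) =
          gnp_prob n (1 - p n) (\<lambda>E. C \<le> real (card (adj_dom_pairs n E)))"
      by (rule gnp_comp)
    thus ?thesis by (simp add: card_adp_comp)
  qed
  thus ?thesis using assms unfolding aas_def by simp
qed

lemma aas_dual2:
  assumes "aas p (\<lambda>n E. real (card (adj_dom_pairs n E)) \<ge> C)"
  shows "aas (\<lambda>n. 1 - p n) (\<lambda>n E. real (card (nonadj_dom_pairs n E)) \<ge> C)"
proof -
  have "gnp_prob n (1 - p n) (\<lambda>E. C \<le> real (card (nonadj_dom_pairs n E))) =
        gnp_prob n (p n) (\<lambda>E. C \<le> real (card (adj_dom_pairs n E)))" for n
  proof -
    have "gnp_prob n (p n) (\<lambda>E. C \<le> real (card (nonadj_dom_pairs n (compG n E)))) =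
          gnp_prob n (1 - p n) (\<lambda>E. C \<le> real (card (nonadj_dom_pairs n E)))"
      by (rule gnp_comp)
    thus ?thesis by (simp add: card_nadp_comp)
  qed
  thus ?thesis using assms unfolding aas_def by simp
qed

theorem proposition2p7:
  fixes C :: real and p :: "nat \<Rightarrow> real"
  assumes "C > 0"
    and "\<And>n. 0 \<le> p n \<and> p n \<le> 1"
  shows
    "((\<exists>\<omega> :: nat \<Rightarrow> real. filterlim \<omega> at_top sequentially \<and>
        (\<forall>\<^sub>F n in sequentially. p n < (ln (real n) + ln (ln (real n)) - \<omega> n) / real n))
      \<longrightarrow> aas p (\<lambda>n E. real (card (nonadj_dom_pairs n E)) \<ge> C)
        \<and> (filterlim (\<lambda>n. p n * (real n)^2) at_top sequentially
            \<longrightarrow> aas p (\<lambda>n E. real (card (adj_dom_pairs n E)) \<ge> C)))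
   \<and> ((\<exists>\<omega> :: nat \<Rightarrow> real. filterlim \<omega> at_top sequentially \<and>
        (\<forall>\<^sub>F n in sequentially. 1 - p n < (ln (real n) + ln (ln (real n)) - \<omega> n) / real n))
      \<longrightarrow> aas p (\<lambda>n E. real (card (adj_dom_pairs n E)) \<ge> C)
        \<and> (filterlim (\<lambda>n. (1 - p n) * p n * (real n)^2) at_top sequentially
            \<longrightarrow> aas p (\<lambda>n E. real (card (nonadj_dom_pairs n E)) \<ge> C)))"
proof (intro conjI impI)
  assume "\<exists>\<omega> :: nat \<Rightarrow> real. filterlim \<omega> at_top sequentially \<and>
        (\<forall>\<^sub>F n in sequentially. p n < (ln (real n) + ln (ln (real n)) - \<omega> n) / real n)"
  then obtain \<omega> :: "nat \<Rightarrow> real" where om: "filterlim \<omega> at_top sequentially"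
    and ev: "\<forall>\<^sub>F n in sequentially. p n < (ln (real n) + ln (ln (real n)) - \<omega> n) / real n" by blast
  show "aas p (\<lambda>n E. real (card (nonadj_dom_pairs n E)) \<ge> C)"
    by (rule part1_nonadj[OF assms om ev])
  assume "filterlim (\<lambda>n. p n * (real n)^2) at_top sequentially"
  thus "aas p (\<lambda>n E. real (card (adj_dom_pairs n E)) \<ge> C)"
    by (rule part1_adj[OF assms om ev])
next
  define p' where "p' n = 1 - p n" for n
  have p'01: "0 \<le> p' n \<and> p' n \<le> 1" for n using assms(2)[of n] by (simp add: p'_def)
  have pp': "p = (\<lambda>n. 1 - p' n)" by (simp add: p'_def)
  assume "\<exists>\<omega> :: nat \<Rightarrow> real. filterlim \<omega> at_top sequentially \<and>
        (\<forall>\<^sub>F n in sequentially. 1 - p n < (ln (real n) + ln (ln (real n)) - \<omega> n) / real n)"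
  then obtain \<omega> :: "nat \<Rightarrow> real" where om: "filterlim \<omega> at_top sequentially"
    and ev: "\<forall>\<^sub>F n in sequentially. p' n < (ln (real n) + ln (ln (real n)) - \<omega> n) / real n"
    unfolding p'_def by blast
  have "aas p' (\<lambda>n E. real (card (nonadj_dom_pairs n E)) \<ge> C)"
    by (rule part1_nonadj[OF assms(1) p'01 om ev])
  thus "aas p (\<lambda>n E. real (card (adj_dom_pairs n E)) \<ge> C)"
    unfolding pp' by (rule aas_dual1)
  assume h: "filterlim (\<lambda>n. (1 - p n) * p n * (real n)^2) at_top sequentially"
  have "filterlim (\<lambda>n. p' n * (real n)^2) at_top sequentially"
  proof (rule filterlim_at_top_mono[OF h])
    show "\<forall>\<^sub>F n in sequentially. (1 - p n) * p n * (real n)\<^sup>2 \<le> p' n * (real n)\<^sup>2"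
    proof (rule always_eventually, rule allI)
      fix n
      have "(1 - p n) * p n \<le> (1 - p n) * 1" using assms(2)[of n] by (intro mult_left_mono) auto
      thus "(1 - p n) * p n * (real n)\<^sup>2 \<le> p' n * (real n)\<^sup>2" unfolding p'_def
        by (intro mult_right_mono) auto
    qed
  qed
  hence "aas p' (\<lambda>n E. real (card (adj_dom_pairs n E)) \<ge> C)"
    by (rule part1_adj[OF assms(1) p'01 om ev])
  thus "aas p (\<lambda>n E. real (card (nonadj_dom_pairs n E)) \<ge> C)"
    unfolding pp' by (rule aas_dual2)
qed


end
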